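(* Let $d\ge3$, let $G$ be a $d$-map and let $(W_1,\dots,W_d)$ be a $d$-tuple of sets of arcs of $G$ satisfying conditions (W0), (W1) and (W2) below (in particular, any $d$-GS wood). Then for every $i\in[d]$, $W_i$ is (the set of arcs of) a spanning tree of $G$ oriented toward its root $v_i$, i.e. the underlying edges form a spanning tree and every arc is oriented from child to parent.
   Context: A plane map is a connected graph (loops, multiple edges allowed) embedded in the plane without crossings, up to deformation; outer (unbounded) face, inner faces; outer vertices/edges lie on the outer face; $\deg(f)$ = number of corners of a face. For $d\ge3$, a $d$-map is a plane map with inner faces of degree $\le d$ and outer face of degree $d$ bounded by a simple cycle, with outer vertices $v_1,\dots,v_d$ in clockwise order (indices mod $d$). An arc is a directed edge. Conditions: (W0) for each $i\in[d]$, every vertex $v\ne v_i$ has exactly one outgoing arc in $W_i$ and $v_i$ has none; for $k\ne i$ the arc of $W_i$ out of $v_k$ is the outer arc $v_k\to v_{k+1}$; $W_i$ contains no inner arc oriented toward $v_i$ or $v_{i+1}$. (W1) For each inner vertex $v$ with outgoing arcs $a_1,\dots,a_d$ in $W_1,\dots,W_d$, these are not all equal and appear in clockwise order around $v$ (equalities $a_i=a_{i+1}$ allowed). (W2) With $v$ and $a_1,\dots,a_d$ as in (W1), any arc $a\in W_i$ oriented toward $v$ appears strictly between $a_{i+1}$ and $a_{i-1}$ in clockwise order around $v$. (Sector convention: the clockwise sector from $a_p$ to $a_q$ passes through $a_{p+1},\dots,a_q$; empty if all equal, full turn if not all equal but $a_p=a_q$; strictly between = interior of the sector and not on the edges of $a_p$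 or $a_q$.) A $d$-GS wood is a tuple satisfying (W0)–(W2) and an additional condition (W3). *)

theory Defs
  imports Main
begin

text \<open>
  A plane map is encoded by a finite set H of darts (arcs = directed edges),
  a fixed-point-free involution opp (the reverse arc of the same edge) and a
  permutation nxt of H giving, for each dart, the next dart CLOCKWISE around
  its tail vertex.  With nxt clockwise, the orbit of phi
  through a dart h is the face on the left of h; inner faces are traversed
  counterclockwise and the outer face clockwise.  Planarity (genus 0) of the
  connected map is expressed by Euler's formula.
\<close>

definition tail :: "('a \<Rightarrow> 'a) \<Rightarrow> 'a \<Rightarrow> 'a set" where
  "tail nxt h = {(nxt ^^ k) h | k. True}"

definition head :: "('a \<Rightarrow> 'a) \<Rightarrow> ('a \<Rightarrow> 'a) \<Rightarrow> 'a \<Rightarrow> 'a set" where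
  "head opp nxt h = tail nxt (opp h)"

definition phi :: "('a \<Rightarrow> 'a) \<Rightarrow> ('a \<Rightarrow> 'a) \<Rightarrow> 'a \<Rightarrow> 'a" where
  "phi opp nxt = nxt \<circ> opp"

definition face :: "('a \<Rightarrow> 'a) \<Rightarrow> ('a \<Rightarrow> 'a) \<Rightarrow> 'a \<Rightarrow> 'a set" where
  "face opp nxt h = {(phi opp nxt ^^ k) h | k. True}"

definition vertices :: "'a set \<Rightarrow> ('a \<Rightarrow> 'a) \<Rightarrow> 'a set set" where
  "vertices H nxt = tail nxt ` H"

definition edges :: "'a set \<Rightarrow> ('a \<Rightarrow> 'a) \<Rightarrow> 'a set set" where
  "edges H opp = (\<lambda>h. {h, opp h}) ` H"

definition faces :: "'a set \<Rightarrow> ('a \<Rightarrow> 'a) \<Rightarrow> ('a \<Rightarrow> 'a) \<Rightarrow> 'a set set" where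
  "faces H opp nxt = face opp nxt ` H"

definition plane_map :: "'a set \<Rightarrow> ('a \<Rightarrow> 'a) \<Rightarrow> ('a \<Rightarrow> 'a) \<Rightarrow> bool" where
  "plane_map H opp nxt \<longleftrightarrow>
     finite H \<and>
     (\<forall>h\<in>H. opp h \<in> H \<and> opp h \<noteq> h \<and> opp (opp h) = h) \<and>
     bij_betw nxt H H \<and>
     (\<forall>h\<in>H. \<forall>h'\<in>H. (h, h') \<in> ({(x, opp x) | x. x \<in> H} \<union> {(x, nxt x) | x. x \<in> H})\<^sup>*) \<and>
     int (card (vertices H nxt)) - int (card (edges H opp)) + int (card (faces H opp nxt)) = 2"

text \<open>
  A d-map: the outer face is the phi-orbit of the darts ou 0, ..., ou (d-1),
  where ou k is the outer arc from v_k to v_(k+1) (indices mod d, we use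
  0..d-1 instead of 1..d).
\<close>

definition outer_vertex :: "('a \<Rightarrow> 'a) \<Rightarrow> (nat \<Rightarrow> 'a) \<Rightarrow> nat \<Rightarrow> 'a set" where
  "outer_vertex nxt ou k = tail nxt (ou k)"

definition d_map :: "nat \<Rightarrow> 'a set \<Rightarrow> ('a \<Rightarrow> 'a) \<Rightarrow> ('a \<Rightarrow> 'a) \<Rightarrow> (nat \<Rightarrow> 'a) \<Rightarrow> bool" where
  "d_map d H opp nxt ou \<longleftrightarrow>
     3 \<le> d \<and> plane_map H opp nxt \<and>
     (\<forall>k<d. ou k \<in> H) \<and>
     (\<forall>k<d. phi opp nxt (ou k) = ou (Suc k mod d)) \<and>
     inj_on (\<lambda>k. tail nxt (ou k)) {..<d} \<and>
     (\<forall>h\<in>H. face opp nxt h \<noteq> face opp nxt (ou 0) \<longrightarrow> card (face opp nxt h) \<le> d)"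

definition outer_darts :: "nat \<Rightarrow> (nat \<Rightarrow> 'a) \<Rightarrow> 'a set" where
  "outer_darts d ou = ou ` {..<d}"

definition outer_vertices :: "nat \<Rightarrow> ('a \<Rightarrow> 'a) \<Rightarrow> (nat \<Rightarrow> 'a) \<Rightarrow> 'a set set" where
  "outer_vertices d nxt ou = (\<lambda>k. tail nxt (ou k)) ` {..<d}"

definition inner_arc :: "nat \<Rightarrow> ('a \<Rightarrow> 'a) \<Rightarrow> (nat \<Rightarrow> 'a) \<Rightarrow> 'a \<Rightarrow> bool" where
  "inner_arc d opp ou h \<longleftrightarrow> h \<notin> outer_darts d ou \<and> opp h \<notin> outer_darts d ou"

definition W0 :: "nat \<Rightarrow> 'a set \<Rightarrow> ('a \<Rightarrow> 'a) \<Rightarrow> ('a \<Rightarrow> 'a) \<Rightarrow> (nat \<Rightarrow> 'a) \<Rightarrow> (nat \<Rightarrow> 'a set) \<Rightarrow> bool" where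
  "W0 d H opp nxt ou W \<longleftrightarrow>
     (\<forall>i<d.
        W i \<subseteq> H \<and>
        (\<forall>u\<in>vertices H nxt. u \<noteq> outer_vertex nxt ou i \<longrightarrow> card {h\<in>W i. tail nxt h = u} = 1) \<and>
        {h\<in>W i. tail nxt h = outer_vertex nxt ou i} = {} \<and>
        (\<forall>k<d. k \<noteq> i \<longrightarrow> ou k \<in> W i) \<and>
        (\<forall>h\<in>W i. inner_arc d opp ou h \<longrightarrow>
            head opp nxt h \<noteq> outer_vertex nxt ou i \<and>
            head opp nxt h \<noteq> outer_vertex nxt ou (Suc i mod d)))"

definition outarc :: "('a \<Rightarrow> 'a) \<Rightarrow> (nat \<Rightarrow> 'a set) \<Rightarrow> nat \<Rightarrow> 'a set \<Rightarrow> 'a" where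
  "outarc nxt W j u = (THE h. h \<in> W j \<and> tail nxt h = u)"

definition cw_dist :: "('a \<Rightarrow> 'a) \<Rightarrow> 'a \<Rightarrow> 'a \<Rightarrow> nat" where
  "cw_dist nxt x y = (LEAST k. (nxt ^^ k) x = y)"

text \<open>(W1): a_1..a_d not all equal and in clockwise order around v, i.e.
  going clockwise from a_1 through a_2, ..., a_d back to a_1 makes exactly
  one full turn (steps of length 0 allowed for equal arcs).\<close>
definition W1 :: "nat \<Rightarrow> 'a set \<Rightarrow> ('a \<Rightarrow> 'a) \<Rightarrow> ('a \<Rightarrow> 'a) \<Rightarrow> (nat \<Rightarrow> 'a) \<Rightarrow> (nat \<Rightarrow> 'a set) \<Rightarrow> bool" where
  "W1 d H opp nxt ou W \<longleftrightarrow>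
     (\<forall>u\<in>vertices H nxt. u \<notin> outer_vertices d nxt ou \<longrightarrow>
        (\<exists>j<d. outarc nxt W j u \<noteq> outarc nxt W 0 u) \<and>
        (\<Sum>j<d. cw_dist nxt (outarc nxt W j u) (outarc nxt W (Suc j mod d) u)) = card u)"

text \<open>(W2): the clockwise sector from a_(i+1) to a_(i-1) passes through
  a_(i+2), ..., a_(i-1); its angular size is the sum of the d-2 clockwise
  steps.  An arc of W i entering v (seen at v as the dart opp h) must lie
  strictly inside this sector and not on the edges of a_(i+1), a_(i-1).\<close>
definition W2 :: "nat \<Rightarrow> 'a set \<Rightarrow> ('a \<Rightarrow> 'a) \<Rightarrow> ('a \<Rightarrow> 'a) \<Rightarrow> (nat \<Rightarrow> 'a) \<Rightarrow> (nat \<Rightarrow> 'a set) \<Rightarrow> bool" where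
  "W2 d H opp nxt ou W \<longleftrightarrow>
     (\<forall>u\<in>vertices H nxt. u \<notin> outer_vertices d nxt ou \<longrightarrow>
       (\<forall>i<d. \<forall>h\<in>W i. head opp nxt h = u \<longrightarrow>
          (let a = (\<lambda>j. outarc nxt W j u);
               p = Suc i mod d; q = (i + d - 1) mod d;
               D = (\<Sum>t<d-2. cw_dist nxt (a ((i + 1 + t) mod d)) (a ((i + 2 + t) mod d)));
               x = opp h
           in 0 < cw_dist nxt (a p) x \<and> cw_dist nxt (a p) x < D \<and>
              x \<notin> {a p, opp (a p), a q, opp (a q)})))"

definition dir_rel :: "('a \<Rightarrow> 'a) \<Rightarrow> ('a \<Rightarrow> 'a) \<Rightarrow> 'a set \<Rightarrow> ('a set \<times> 'a set) set" where
  "dir_rel opp nxt W = {(tail nxt h, head opp nxt h) | h. h \<in> W}"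

text \<open>A cycle in the undirected (multi)graph of the edges of W: a closed walk
  of length \<ge> 1 using pairwise distinct edges and visiting pairwise distinct
  vertices (a loop is a cycle of length 1).\<close>
definition has_cycle :: "('a \<Rightarrow> 'a) \<Rightarrow> ('a \<Rightarrow> 'a) \<Rightarrow> 'a set \<Rightarrow> bool" where
  "has_cycle opp nxt W \<longleftrightarrow>
     (\<exists>hs. hs \<noteq> [] \<and> set hs \<subseteq> W \<union> opp ` W \<and>
        distinct (map (\<lambda>h. {h, opp h}) hs) \<and>
        distinct (map (tail nxt) hs) \<and>
        (\<forall>j<length hs. head opp nxt (hs ! j) = tail nxt (hs ! (Suc j mod length hs))))"

definition spanning_tree_toward ::
  "'a set \<Rightarrow> ('a \<Rightarrow> 'a) \<Rightarrow> ('a \<Rightarrow> 'a) \<Rightarrow> 'a set \<Rightarrow> 'a set \<Rightarrow> bool" where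
  "spanning_tree_toward H opp nxt W r \<longleftrightarrow>
     W \<subseteq> H \<and>
     (\<forall>h\<in>W. opp h \<notin> W) \<and>
     \<comment> \<open>underlying undirected edges: connected, spanning, acyclic\<close>
     (\<forall>u\<in>vertices H nxt. (u, r) \<in> (dir_rel opp nxt W \<union> (dir_rel opp nxt W)\<inverse>)\<^sup>*) \<and>
     \<not> has_cycle opp nxt W \<and>
     \<comment> \<open>orientation toward the root: every vertex reaches r along arcs of W\<close>
     (\<forall>u\<in>vertices H nxt. (u, r) \<in> (dir_rel opp nxt W)\<^sup>*)"

end

theory Submission
  imports Defs
begin

definition orb :: "('a \<Rightarrow> 'a) \<Rightarrow> 'a \<Rightarrow> 'a set" where
  "orb f x = {(f ^^ k) x | k. True}"

definition cyc :: "('a \<Rightarrow> 'a) \<Rightarrow> 'a set \<Rightarrow> nat" where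
  "cyc f S = card (orb f ` S)"

definition per :: "('a \<Rightarrow> 'a) \<Rightarrow> 'a \<Rightarrow> nat" where
  "per f x = (LEAST n. 0 < n \<and> (f ^^ n) x = x)"

lemma orb_self[simp]: "x \<in> orb f x"
  unfolding orb_def by (auto intro: exI[of _ 0])

lemma orb_funpow[simp]: "(f ^^ k) x \<in> orb f x"
  unfolding orb_def by auto

lemma orb_step: "y \<in> orb f x \<Longrightarrow> f y \<in> orb f x"
  unfolding orb_def by (auto intro: exI[of _ "Suc k" for k])

lemma orb_f[simp]: "f x \<in> orb f x"
  using orb_step[OF orb_self] .

lemma orb_trans: "y \<in> orb f x \<Longrightarrow> orb f y \<subseteq> orb f x"
  unfolding orb_def by (auto, metis funpow_add comp_apply)

lemma orb_closed: "(\<And>y. y \<in> A \<Longrightarrow> f y \<in> A) \<Longrightarrow> x \<in> A \<Longrightarrow> orb f x \<subseteq> A"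
proof
  fix y assume h: "\<And>y. y \<in> A \<Longrightarrow> f y \<in> A" "x \<in> A" "y \<in> orb f x"
  then obtain k where "y = (f ^^ k) x" unfolding orb_def by auto
  moreover have "(f ^^ k) x \<in> A" for k by (induct k) (auto simp: h)
  ultimately show "y \<in> A" by simp
qed

lemma orb_agree:
  assumes "\<And>y. y \<notin> B \<Longrightarrow> g y = f y" "orb f x \<inter> B = {}"
  shows "orb g x = orb f x"
proof -
  have "(g ^^ k) x = (f ^^ k) x" for k
  proof (induct k)
    case (Suc k)
    have "(f ^^ k) x \<notin> B" using assms(2) orb_funpow[where f=f and k=k and x=x] by blast
    then show ?case using Suc by (simp add: assms(1))
  qed simp
  then show ?thesis unfolding orb_def by simp
qed

locale perm =
  fixes f :: "'a \<Rightarrow> 'a" and S :: "'a set"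
  assumes fin: "finite S" and bij: "bij_betw f S S"
begin

lemma maps: "x \<in> S \<Longrightarrow> f x \<in> S"
  using bij by (auto simp: bij_betw_def)

lemma funpow_in: "x \<in> S \<Longrightarrow> (f ^^ k) x \<in> S"
  by (induct k) (auto simp: maps)

lemma orb_sub: "x \<in> S \<Longrightarrow> orb f x \<subseteq> S"
  by (rule orb_closed) (auto simp: maps)

lemma inj: "inj_on f S"
  using bij by (auto simp: bij_betw_def)

lemma funpow_inj: "inj_on (f ^^ k) S"
  using bij_betw_funpow[OF bij] by (auto simp: bij_betw_def)

lemma period_ex: assumes "x \<in> S" shows "\<exists>n>0. (f ^^ n) x = x"
proof -
  let ?g = "\<lambda>k. (f ^^ k) x"
  have "?g ` {0..card S} \<subseteq> S" using funpow_in[OF assms] by auto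
  moreover have "card {0..card S} > card S" by simp
  ultimately have "\<not> inj_on ?g {0..card S}"
    using card_inj_on_le[of ?g "{0..card S}" S] fin by auto
  then obtain i j where ij: "i \<noteq> j" "?g i = ?g j" unfolding inj_on_def by auto
  have main: "\<exists>n>0. (f ^^ n) x = x" if "i < j" "?g i = ?g j" for i j
  proof -
    have "(f ^^ i) ((f ^^ (j - i)) x) = (f ^^ i) x"
      using that by (metis funpow_add comp_apply le_add_diff_inverse less_imp_le)
    then have "(f ^^ (j - i)) x = x"
      using funpow_inj[of i] assms funpow_in[OF assms] unfolding inj_on_def by blast
    then show ?thesis using that by (intro exI[of _ "j - i"]) auto
  qed
  show ?thesis
  proof (cases "i < j")
    case True then show ?thesis using main ij by blast
  next
    case False then have "j < i" using ij by auto
    then show ?thesis using main ij by metis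
  qed
qed

lemma per_pos: "x \<in> S \<Longrightarrow> 0 < per f x"
  unfolding per_def by (metis (mono_tags, lifting) LeastI_ex period_ex)

lemma per_id: "x \<in> S \<Longrightarrow> (f ^^ per f x) x = x"
  unfolding per_def by (metis (mono_tags, lifting) LeastI_ex period_ex)

lemma per_min: "x \<in> S \<Longrightarrow> 0 < m \<Longrightarrow> m < per f x \<Longrightarrow> (f ^^ m) x \<noteq> x"
  unfolding per_def using not_less_Least by blast

lemma funpow_mod: assumes "x \<in> S" shows "(f ^^ k) x = (f ^^ (k mod per f x)) x"
proof -
  have "(f ^^ (m * per f x)) x = x" for m
    by (induct m) (auto simp: funpow_add[unfolded comp_def] per_id[OF assms])
  then have "(f ^^ (k mod per f x + (k div per f x) * per f x)) x = (f ^^ (k mod per f x)) x"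
    by (simp add: funpow_add[unfolded comp_def])
  then show ?thesis by (metis mod_div_mult_eq)
qed

lemma orb_per: "x \<in> S \<Longrightarrow> orb f x = (\<lambda>k. (f ^^ k) x) ` {..<per f x}"
proof
  assume x: "x \<in> S"
  show "orb f x \<subseteq> (\<lambda>k. (f ^^ k) x) ` {..<per f x}"
  proof
    fix y assume "y \<in> orb f x"
    then obtain k where "y = (f ^^ k) x" unfolding orb_def by auto
    then have "y = (f ^^ (k mod per f x)) x" using funpow_mod[OF x] by simp
    moreover have "k mod per f x < per f x" using per_pos[OF x] by simp
    ultimately show "y \<in> (\<lambda>k. (f ^^ k) x) ` {..<per f x}" by blast
  qed
  show "(\<lambda>k. (f ^^ k) x) ` {..<per f x} \<subseteq> orb f x" by auto
qed

lemma per_inj: "x \<in> S \<Longrightarrow> inj_on (\<lambda>k. (f ^^ k) x) {..<per f x}"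
  using inj_on_funpow_least[where f=f and n="per f x" and s=x] per_id per_min
  by (simp add: atLeast0LessThan)

lemma card_orb: "x \<in> S \<Longrightarrow> card (orb f x) = per f x"
  using orb_per per_inj card_image by fastforce

lemma finite_orb: "x \<in> S \<Longrightarrow> finite (orb f x)"
  using orb_sub fin finite_subset by blast

lemma orb_sym: assumes "x \<in> S" "y \<in> orb f x" shows "x \<in> orb f y"
proof -
  obtain k where k: "y = (f ^^ k) x" using assms unfolding orb_def by auto
  let ?p = "per f x"
  have "(f ^^ (?p - k mod ?p)) y = (f ^^ (?p - k mod ?p + k mod ?p)) x"
    using k funpow_mod[OF assms(1), of k] by (simp add: funpow_add[unfolded comp_def])
  also have "?p - k mod ?p + k mod ?p = ?p" using per_pos[OF assms(1)]
    by (simp add: order.strict_implies_order)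
  finally have "(f ^^ (?p - k mod ?p)) y = x" using per_id[OF assms(1)] by simp
  then show ?thesis unfolding orb_def by (metis (mono_tags, lifting) mem_Collect_eq)
qed

lemma orb_eq: assumes "x \<in> S" "y \<in> orb f x" shows "orb f y = orb f x"
proof
  show "orb f y \<subseteq> orb f x" using orb_trans[OF assms(2)] .
  have "x \<in> orb f y" using orb_sym[OF assms] .
  then show "orb f x \<subseteq> orb f y" by (rule orb_trans)
qed

lemma orb_f_eq: "x \<in> S \<Longrightarrow> orb f (f x) = orb f x"
  by (rule orb_eq) auto

lemma orb_inv: assumes "x \<in> S" "y \<in> S" "f y \<in> orb f x" shows "y \<in> orb f x"
proof -
  have "orb f (f y) = orb f x" using orb_eq[OF assms(1,3)] .
  moreover have "orb f (f y) = orb f y" using orb_f_eq[OF assms(2)] .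
  ultimately show ?thesis using orb_self[of y f] by simp
qed

lemma orb_mem_eq: assumes "x \<in> S" "y \<in> S" "z \<in> orb f x" "z \<in> orb f y" shows "orb f x = orb f y"
  using orb_eq[OF assms(1,3)] orb_eq[OF assms(2,4)] by simp

lemma orb_disj: "x \<in> S \<Longrightarrow> y \<in> S \<Longrightarrow> orb f x = orb f y \<or> orb f x \<inter> orb f y = {}"
  using orb_mem_eq by blast

end

definition sw :: "'a \<Rightarrow> 'a \<Rightarrow> 'a \<Rightarrow> 'a" where
  "sw a b x = (if x = a then b else if x = b then a else x)"

lemma sw_sw[simp]: "sw a b (sw a b x) = x"
  unfolding sw_def by auto

lemma sw_bij: "a \<in> S \<Longrightarrow> b \<in> S \<Longrightarrow> bij_betw (sw a b) S S"
  unfolding bij_betw_def inj_on_def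
  by (auto simp: sw_def image_def)

lemma sw_other[simp]: "x \<noteq> a \<Longrightarrow> x \<noteq> b \<Longrightarrow> sw a b x = x"
  unfolding sw_def by auto

lemma sw_a[simp]: "sw a b a = b" and sw_b[simp]: "sw a b b = a"
  unfolding sw_def by auto

lemma perm_comp: "perm f S \<Longrightarrow> bij_betw g S S \<Longrightarrow> perm (f \<circ> g) S"
  unfolding perm_def using bij_betw_trans by blast

context perm
begin

lemma first_return:
  assumes a: "a \<in> S" and b: "b \<in> S" and ab: "a \<noteq> b" and nb: "b \<notin> orb f a"
  shows "b \<in> orb (f \<circ> sw a b) a"
proof -
  define g where "g = f \<circ> sw a b"
  have gx: "g x = f (sw a b x)" for x unfolding g_def by simp
  let ?p = "per f b"
  have na: "a \<notin> orb f b" using orb_sym[OF b, of a] nb by blast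
  have "1 \<le> m \<Longrightarrow> m \<le> ?p \<Longrightarrow> (g ^^ m) a = (f ^^ m) b" for m
  proof (induct m)
    case 0 then show ?case by simp
  next
    case (Suc m)
    show ?case
    proof (cases "m = 0")
      case True then show ?thesis unfolding g_def by simp
    next
      case False
      then have IH: "(g ^^ m) a = (f ^^ m) b" using Suc by simp
      have "(f ^^ m) b \<noteq> a" using na orb_funpow[where f=f and k=m and x=b] by auto
      moreover have "(f ^^ m) b \<noteq> b" using per_min[OF b, of m] False Suc by simp
      ultimately have "g ((f ^^ m) b) = f ((f ^^ m) b)" unfolding g_def by simp
      then show ?thesis using IH by simp
    qed
  qed
  from this[of ?p] have "(g ^^ ?p) a = b" using per_pos[OF b] per_id[OF b] by simp
  then show ?thesis unfolding g_def[symmetric] by (metis orb_funpow)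
qed

lemma cyc_swap:
  assumes a: "a \<in> S" and b: "b \<in> S" and ab: "a \<noteq> b"
  shows "cyc (f \<circ> sw a b) S \<le> cyc f S + 1"
    and "b \<notin> orb f a \<Longrightarrow> cyc (f \<circ> sw a b) S + 1 \<le> cyc f S"
proof -
  define g where "g = f \<circ> sw a b"
  interpret g: perm g S unfolding g_def using perm_comp[OF _ sw_bij[OF a b]] perm_axioms by blast
  have agree1: "\<And>y. y \<notin> {a,b} \<Longrightarrow> g y = f y" unfolding g_def by auto
  have agree2: "\<And>y. y \<notin> {a,b} \<Longrightarrow> f y = g y" unfolding g_def by auto
  define Or where "Or = {X \<in> orb f ` S. a \<notin> X \<and> b \<notin> X}"
  define Og where "Og = {X \<in> orb g ` S. a \<notin> X \<and> b \<notin> X}"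
  have OrOg: "Og = Or"
  proof
    show "Or \<subseteq> Og"
    proof
      fix X assume "X \<in> Or"
      then obtain x where x: "x \<in> S" "X = orb f x" "a \<notin> X" "b \<notin> X" unfolding Or_def by auto
      have "orb f x \<inter> {a,b} = {}" using x by auto
      then have "orb g x = orb f x" using orb_agree[where B="{a,b}" and g=g and f=f and x=x] agree1 by blast
      then show "X \<in> Og" unfolding Og_def using x by auto
    qed
    show "Og \<subseteq> Or"
    proof
      fix X assume "X \<in> Og"
      then obtain x where x: "x \<in> S" "X = orb g x" "a \<notin> X" "b \<notin> X" unfolding Og_def by auto
      have "orb g x \<inter> {a,b} = {}" using x by auto
      then have "orb f x = orb g x" using orb_agree[where B="{a,b}" and g=f and f=g and x=x] agree2 by blast
      then show "X \<in> Or" unfolding Or_def using x by auto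
    qed
  qed
  have finf: "finite (orb f ` S)" and fing: "finite (orb g ` S)" using fin by auto
  define Rf where "Rf = {X \<in> orb f ` S. a \<in> X \<or> b \<in> X}"
  define Rg where "Rg = {X \<in> orb g ` S. a \<in> X \<or> b \<in> X}"
  have cf: "cyc f S = card Or + card Rf"
  proof -
    have e: "orb f ` S = Or \<union> Rf" unfolding Or_def Rf_def by blast
    have "Or \<inter> Rf = {}" unfolding Or_def Rf_def by blast
    moreover have "finite Or" "finite Rf" unfolding Or_def Rf_def using finf by auto
    ultimately show ?thesis unfolding cyc_def e by (simp add: card_Un_disjoint)
  qed
  have cg: "cyc g S = card Og + card Rg"
  proof -
    have e: "orb g ` S = Og \<union> Rg" unfolding Og_def Rg_def by blast
    have "Og \<inter> Rg = {}" unfolding Og_def Rg_def by blast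
    moreover have "finite Og" "finite Rg" unfolding Og_def Rg_def using fing by auto
    ultimately show ?thesis unfolding cyc_def e by (simp add: card_Un_disjoint)
  qed
  have Rg_sub: "Rg \<subseteq> {orb g a, orb g b}"
  proof
    fix X assume "X \<in> Rg"
    then obtain x where x: "x \<in> S" "X = orb g x" "a \<in> X \<or> b \<in> X" unfolding Rg_def by auto
    show "X \<in> {orb g a, orb g b}"
    proof (cases "a \<in> X")
      case True
      then have "orb g a = orb g x" using g.orb_eq[OF x(1), of a] x(2) by simp
      then show ?thesis using x(2) by simp
    next
      case False
      then have "b \<in> X" using x(3) by simp
      then have "orb g b = orb g x" using g.orb_eq[OF x(1), of b] x(2) by simp
      then show ?thesis using x(2) by simp
    qed
  qed
  have finRf: "finite Rf" unfolding Rf_def using finf by simp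
  have finRg: "finite Rg" unfolding Rg_def using fing by simp
  have "card Rg \<le> card {orb g a, orb g b}" by (rule card_mono) (auto simp: Rg_sub)
  also have "card {orb g a, orb g b} \<le> 2" by (cases "orb g a = orb g b") auto
  finally have "card Rg \<le> 2" .
  moreover have "orb f a \<in> Rf" unfolding Rf_def using a by auto
  then have "Rf \<noteq> {}" by blast
  then have "card Rf > 0" using finRf card_gt_0_iff by blast
  then have "card Rf \<ge> 1" by simp
  ultimately have "cyc g S \<le> cyc f S + 1" using cf cg OrOg[THEN arg_cong[where f=card]] by linarith
  then show "cyc (f \<circ> sw a b) S \<le> cyc f S + 1" unfolding g_def .
  assume nb: "b \<notin> orb f a"
  have "b \<in> orb g a" using first_return[OF a b ab nb] unfolding g_def .
  then have "orb g b = orb g a" using g.orb_eq[OF a] by blast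
  then have "Rg \<subseteq> {orb g a}" using Rg_sub by auto
  then have "card Rg \<le> card {orb g a}" by (intro card_mono) auto
  then have "card Rg \<le> 1" by simp
  moreover have "{orb f a, orb f b} \<subseteq> Rf" unfolding Rf_def using a b by auto
  moreover have "orb f a \<noteq> orb f b" using nb by (metis orb_self)
  ultimately have "card Rf \<ge> 2" "card Rg \<le> 1"
    using card_mono[OF finRf, of "{orb f a, orb f b}"] by auto
  then have "cyc g S + 1 \<le> cyc f S" using cf cg OrOg[THEN arg_cong[where f=card]] by linarith
  then show "cyc (f \<circ> sw a b) S + 1 \<le> cyc f S" unfolding g_def .
qed

end

definition stepr :: "('a \<Rightarrow> 'a) \<Rightarrow> ('a \<Rightarrow> 'a) \<Rightarrow> 'a set \<Rightarrow> ('a \<times> 'a) set" where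
  "stepr s t S = {(x, s x) | x. x \<in> S} \<union> {(x, t x) | x. x \<in> S} \<union> {(s x, x) | x. x \<in> S} \<union> {(t x, x) | x. x \<in> S}"

definition conn :: "('a \<Rightarrow> 'a) \<Rightarrow> ('a \<Rightarrow> 'a) \<Rightarrow> 'a set \<Rightarrow> ('a \<times> 'a) set" where
  "conn s t S = (stepr s t S)\<^sup>*"

lemma conn_refl[simp]: "(x, x) \<in> conn s t S"
  unfolding conn_def by simp

lemma conn_sym: "(x, y) \<in> conn s t S \<Longrightarrow> (y, x) \<in> conn s t S"
proof -
  have "sym (stepr s t S)" unfolding sym_def stepr_def by blast
  then have "sym (conn s t S)" unfolding conn_def by (rule sym_rtrancl)
  then show "(x, y) \<in> conn s t S \<Longrightarrow> (y, x) \<in> conn s t S" unfolding sym_def by blast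
qed

lemma conn_trans: "(x, y) \<in> conn s t S \<Longrightarrow> (y, z) \<in> conn s t S \<Longrightarrow> (x, z) \<in> conn s t S"
  unfolding conn_def by simp

lemma conn_s: "x \<in> S \<Longrightarrow> (x, s x) \<in> conn s t S"
  unfolding conn_def stepr_def by (rule r_into_rtrancl) blast

lemma conn_t: "x \<in> S \<Longrightarrow> (x, t x) \<in> conn s t S"
  unfolding conn_def stepr_def by (rule r_into_rtrancl) blast

lemma quot_img: "S // r = (\<lambda>x. r `` {x}) ` S"
  unfolding quotient_def by auto

lemma quot_le:
  assumes fin: "finite S" and sub: "R \<subseteq> T" and reflR: "\<And>x. (x,x) \<in> R" and transT: "trans T"
  shows "card (S // T) \<le> card (S // R)"
proof -
  have "S // T = (\<lambda>X. T `` X) ` (S // R)"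
  proof -
    have "T `` (R `` {x}) = T `` {x}" for x
      using sub reflR transT unfolding trans_def by blast
    then show ?thesis unfolding quot_img image_image by simp
  qed
  moreover have "finite (S // R)" unfolding quot_img using fin by simp
  ultimately show ?thesis by (simp add: card_image_le)
qed

lemma quot_merge:
  assumes fin: "finite S" and a: "a \<in> S" and b: "b \<in> S"
    and refl: "\<And>x. (x,x) \<in> R" and sym: "\<And>x y. (x,y) \<in> R \<Longrightarrow> (y,x) \<in> R"
    and trans: "\<And>x y z. (x,y) \<in> R \<Longrightarrow> (y,z) \<in> R \<Longrightarrow> (x,z) \<in> R"
    and T: "T = {(x,y). (x,y) \<in> R \<or> ((x,a) \<in> R \<and> (b,y) \<in> R) \<or> ((x,b) \<in> R \<and> (a,y) \<in> R)}"
  shows "card (S // R) \<le> card (S // T) + 1"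
proof -
  define K where "K = {X \<in> S // R. a \<notin> X \<and> b \<notin> X}"
  have finR: "finite (S // R)" and finT: "finite (S // T)" unfolding quot_img using fin by auto
  have KT: "K \<subseteq> S // T"
  proof
    fix X assume "X \<in> K"
    then obtain x where x: "x \<in> S" "X = R `` {x}" "a \<notin> X" "b \<notin> X" unfolding K_def quot_img by auto
    then have "T `` {x} = R `` {x}" unfolding T by auto
    then show "X \<in> S // T" unfolding quot_img using x by auto
  qed
  have Ta: "T `` {a} \<in> S // T" unfolding quot_img using a by auto
  have aTa: "a \<in> T `` {a}" unfolding T using refl by blast
  have nK: "T `` {a} \<notin> K" unfolding K_def using aTa by blast
  have "insert (T `` {a}) K \<subseteq> S // T" using KT Ta by blast
  then have "card (insert (T `` {a}) K) \<le> card (S // T)" using card_mono[OF finT] by blast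
  moreover have "card (insert (T `` {a}) K) = card K + 1"
    using finite_subset[OF KT finT] nK by simp
  ultimately have c1: "card K + 1 \<le> card (S // T)" by simp
  have "S // R \<subseteq> K \<union> {R `` {a}, R `` {b}}"
  proof
    fix X assume X: "X \<in> S // R"
    then obtain x where x: "x \<in> S" "X = R `` {x}" unfolding quot_img by auto
    show "X \<in> K \<union> {R `` {a}, R `` {b}}"
    proof (cases "a \<in> X \<or> b \<in> X")
      case True
      have eq: "R `` {x} = R `` {y}" if "(x, y) \<in> R" for y
      proof
        show "R `` {x} \<subseteq> R `` {y}" using that sym trans by blast
        show "R `` {y} \<subseteq> R `` {x}" using that trans by blast
      qed
      from True have "(x, a) \<in> R \<or> (x, b) \<in> R" using x by blast
      then have "X = R `` {a} \<or> X = R `` {b}" using eq x(2) by blast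
      then show ?thesis by auto
    next
      case False then show ?thesis using X unfolding K_def by auto
    qed
  qed
  then have "card (S // R) \<le> card (K \<union> {R `` {a}, R `` {b}})"
    using finR finite_subset[OF KT finT] by (intro card_mono) auto
  also have "\<dots> \<le> card K + card {R `` {a}, R `` {b}}" by (rule card_Un_le)
  also have "card {R `` {a}, R `` {b}} \<le> 2" by (simp add: card_insert_le_m1)
  finally show ?thesis using c1 by linarith
qed

theorem genus:
  assumes fin: "finite S" and bs: "bij_betw s S S" and bt: "bij_betw t S S"
  shows "cyc s S + cyc t S + cyc (s \<circ> t) S \<le> card S + 2 * card (S // conn s t S)"
  using bt
proof (induct "card {x \<in> S. t x \<noteq> x}" arbitrary: t rule: less_induct)
  case less
  interpret s: perm s S using fin bs by unfold_locales
  interpret t: perm t S using fin less.prems by unfold_locales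
  show ?case
  proof (cases "\<forall>x\<in>S. t x = x")
    case True
    have ot: "orb t x = {x}" if "x \<in> S" for x
    proof -
      have "(t ^^ k) x = x" for k by (induct k) (auto simp: True that)
      then show ?thesis unfolding orb_def by auto
    qed
    have "cyc t S = card S" unfolding cyc_def
      by (metis (no_types, lifting) card_image image_cong inj_on_def ot singleton_inject)
    moreover have "cyc (s \<circ> t) S = cyc s S"
    proof -
      have "orb (s \<circ> t) x = orb s x" if "x \<in> S" for x
        by (rule orb_agree[where B="- S"]) (use True s.orb_sub[OF that] in auto)
      then show ?thesis unfolding cyc_def by (metis (mono_tags, lifting) image_cong)
    qed
    moreover have "S // conn s t S = orb s ` S"
    proof -
      have "conn s t S `` {x} = orb s x" if x: "x \<in> S" for x
      proof
        show "conn s t S `` {x} \<subseteq> orb s x"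
        proof
          fix y assume "y \<in> conn s t S `` {x}"
          then have "(x, y) \<in> (stepr s t S)\<^sup>*" unfolding conn_def by auto
          then show "y \<in> orb s x"
          proof (induct rule: rtrancl_induct)
            case base then show ?case by simp
          next
            case (step y z)
            have yS: "y \<in> S" using s.orb_sub[OF x] step by auto
            from step(2) show ?case unfolding stepr_def
            proof (elim UnE CollectE exE conjE)
              fix w assume "(y, z) = (w, s w)" "w \<in> S" then show ?thesis using step orb_step by auto
            next
              fix w assume "(y, z) = (w, t w)" "w \<in> S" then show ?thesis using step True by auto
            next
              fix w assume "(y, z) = (s w, w)" "w \<in> S" then show ?thesis using step s.orb_inv[OF x] by auto
            next
              fix w assume "(y, z) = (t w, w)" "w \<in> S" then show ?thesis using step True by auto
            qed
          qed
        qed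
        show "orb s x \<subseteq> conn s t S `` {x}"
        proof
          fix y assume "y \<in> orb s x"
          then obtain k where k: "y = (s ^^ k) x" unfolding orb_def by auto
          have "(x, (s ^^ k) x) \<in> conn s t S" for k
          proof (induct k)
            case (Suc k)
            then show ?case using conn_trans conn_s s.funpow_in[OF x, of k] by fastforce
          qed simp
          then show "y \<in> conn s t S `` {x}" using k by auto
        qed
      qed
      then show ?thesis unfolding quot_img by (metis (mono_tags, lifting) image_cong)
    qed
    ultimately show ?thesis unfolding cyc_def by simp
  next
    case False
    then obtain a where a: "a \<in> S" "t a \<noteq> a" by auto
    define b where "b = t a"
    have b: "b \<in> S" "b \<noteq> a" using a t.maps b_def by auto
    define t0 where "t0 = t \<circ> sw a b"
    have bt0: "bij_betw t0 S S" unfolding t0_def using bij_betw_trans[OF sw_bij[OF a(1) b(1)] less.prems] .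
    interpret t0: perm t0 S using fin bt0 by unfold_locales
    have tt0: "t = t0 \<circ> sw a b" unfolding t0_def by (auto simp: fun_eq_iff)
    have t0b: "t0 b = b" unfolding t0_def b_def by simp
    have t0a: "t0 a = t b" unfolding t0_def by simp
    have tb: "t b \<noteq> b" using t.inj a b b_def unfolding inj_on_def by metis
    have sub: "{x \<in> S. t0 x \<noteq> x} \<subseteq> {x \<in> S. t x \<noteq> x} - {b}"
      unfolding t0_def using a b_def t0b by (auto simp: sw_def t0_def split: if_splits)
    have lt: "card {x \<in> S. t0 x \<noteq> x} < card {x \<in> S. t x \<noteq> x}"
    proof -
      have "{x \<in> S. t0 x \<noteq> x} \<subset> {x \<in> S. t x \<noteq> x}" using sub b tb by auto
      then show ?thesis using fin by (intro psubset_card_mono) auto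
    qed
    have IH: "cyc s S + cyc t0 S + cyc (s \<circ> t0) S \<le> card S + 2 * card (S // conn s t0 S)"
      using less.hyps[OF lt bt0] .
    have ct: "cyc t S + 1 \<le> cyc t0 S"
    proof -
      have "b \<notin> orb t0 a"
      proof
        assume "b \<in> orb t0 a"
        then have "a \<in> orb t0 b" using t0.orb_sym[OF a(1)] by simp
        moreover have "orb t0 b = {b}"
        proof -
          have "(t0 ^^ k) b = b" for k by (induct k) (auto simp: t0b)
          then show ?thesis unfolding orb_def by auto
        qed
        ultimately show False using b by auto
      qed
      then show ?thesis using t0.cyc_swap(2)[OF a(1) b(1) b(2)[symmetric]] tt0 by simp
    qed
    interpret st0: perm "s \<circ> t0" S using perm_comp[OF _ bt0] s.perm_axioms by blast
    have stt: "s \<circ> t = (s \<circ> t0) \<circ> sw a b" using tt0 by (simp add: comp_assoc)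
    define R0 where "R0 = conn s t0 S"
    define T where "T = {(x,y). (x,y) \<in> R0 \<or> ((x,a) \<in> R0 \<and> (b,y) \<in> R0) \<or> ((x,b) \<in> R0 \<and> (a,y) \<in> R0)}"
    have R0r: "\<And>x. (x,x) \<in> R0" and R0s: "\<And>x y. (x,y) \<in> R0 \<Longrightarrow> (y,x) \<in> R0"
      and R0t: "\<And>x y z. (x,y) \<in> R0 \<Longrightarrow> (y,z) \<in> R0 \<Longrightarrow> (x,z) \<in> R0"
      unfolding R0_def using conn_sym conn_trans by auto
    have transT: "trans T" unfolding T_def trans_def using R0s R0t by blast
    have RT: "conn s t S \<subseteq> T"
    proof
      fix p assume "p \<in> conn s t S"
      then obtain x y where p: "p = (x,y)" "(x,y) \<in> (stepr s t S)\<^sup>*" unfolding conn_def by (cases p) auto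
      have base: "stepr s t S \<subseteq> T"
      proof
        fix q assume "q \<in> stepr s t S"
        then show "q \<in> T" unfolding stepr_def
        proof (elim UnE CollectE exE conjE)
          fix w assume "q = (w, s w)" "w \<in> S"
          then have "q \<in> R0" unfolding R0_def using conn_s[of w S s t0] by simp
          then show ?thesis unfolding T_def by auto
        next
          fix w assume "q = (s w, w)" "w \<in> S"
          then have "q \<in> R0" unfolding R0_def using conn_s[of w S s t0] conn_sym by auto
          then show ?thesis unfolding T_def by auto
        next
          fix w assume q: "q = (w, t w)" and w: "w \<in> S"
          have at0: "(a, t0 a) \<in> R0" unfolding R0_def using conn_t[of a S t0 s] a(1) by simp
          show ?thesis
          proof (cases "w = a \<or> w = b")
            case True
            then show ?thesis
            proof
              assume "w = a" then have "q = (a, b)" using q b_def by simp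
              then show ?thesis unfolding T_def using R0r by blast
            next
              assume "w = b" then have "q = (b, t0 a)" using q t0a by simp
              then show ?thesis unfolding T_def using R0r at0 by blast
            qed
          next
            case False then have "t w = t0 w" unfolding t0_def by simp
            then have "q \<in> R0" unfolding R0_def q using conn_t[of w S t0 s] w by simp
            then show ?thesis unfolding T_def by auto
          qed
        next
          fix w assume q: "q = (t w, w)" and w: "w \<in> S"
          have at0: "(t0 a, a) \<in> R0" unfolding R0_def using conn_sym[OF conn_t[of a S t0 s, OF a(1)]] .
          show ?thesis
          proof (cases "w = a \<or> w = b")
            case True
            then show ?thesis
            proof
              assume "w = a" then have "q = (b, a)" using q b_def by simp
              then show ?thesis unfolding T_def using R0r by blast
            next
              assume "w = b" then have "q = (t0 a, b)" using q t0a by simp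
              then show ?thesis unfolding T_def using R0r at0 by blast
            qed
          next
            case False then have "t w = t0 w" unfolding t0_def by simp
            then have "q \<in> R0" unfolding R0_def q using conn_t[of w S t0 s] conn_sym w by metis
            then show ?thesis unfolding T_def by auto
          qed
        qed
      qed
      from p(2) have "(x,y) \<in> T"
      proof (induct rule: rtrancl_induct)
        case base then show ?case unfolding T_def using R0r by auto
      next
        case (step y z) then show ?case using base transT unfolding trans_def by blast
      qed
      then show "p \<in> T" using p by simp
    qed
    have c1: "card (S // T) \<le> card (S // conn s t S)"
      by (rule quot_le[OF fin RT _ transT]) simp
    have c2: "card (S // R0) \<le> card (S // T) + 1"
      by (rule quot_merge[OF fin a(1) b(1) R0r R0s R0t T_def])
    show ?thesis
    proof (cases "(a, b) \<in> R0")
      case True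
      then have "T = R0" unfolding T_def using R0s R0t by blast
      then have "card (S // R0) \<le> card (S // conn s t S)" using c1 by simp
      moreover have "cyc (s \<circ> t) S \<le> cyc (s \<circ> t0) S + 1"
        using st0.cyc_swap(1)[OF a(1) b(1) b(2)[symmetric]] stt by simp
      ultimately show ?thesis using IH ct unfolding R0_def by linarith
    next
      case False
      have "b \<notin> orb (s \<circ> t0) a"
      proof
        assume "b \<in> orb (s \<circ> t0) a"
        then obtain k where k: "b = ((s \<circ> t0) ^^ k) a" unfolding orb_def by auto
        have "(a, ((s \<circ> t0) ^^ k) a) \<in> R0" for k
        proof (induct k)
          case (Suc k)
          define y where "y = ((s \<circ> t0) ^^ k) a"
          have inS: "y \<in> S" unfolding y_def using st0.funpow_in[OF a(1)] .
          then have t0y: "t0 y \<in> S" using t0.maps by simp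
          have "((s \<circ> t0) ^^ Suc k) a = s (t0 y)" unfolding y_def by simp
          moreover have "(a, y) \<in> R0" using Suc unfolding y_def .
          moreover have "(y, t0 y) \<in> R0" unfolding R0_def using conn_t[OF inS, of t0 s] .
          moreover have "(t0 y, s (t0 y)) \<in> R0" unfolding R0_def using conn_s[OF t0y, of s t0] .
          ultimately show ?case using R0t by metis
        qed (simp add: R0r)
        then show False using False k by simp
      qed
      then have "cyc (s \<circ> t) S + 1 \<le> cyc (s \<circ> t0) S"
        using st0.cyc_swap(2)[OF a(1) b(1) b(2)[symmetric]] stt by simp
      then show ?thesis using IH ct c1 c2 unfolding R0_def by linarith
    qed
  qed
qed

lemma tail_orb: "tail nxt = orb nxt"
  by (auto simp: tail_def orb_def fun_eq_iff)

lemma face_orb: "face opp nxt = orb (phi opp nxt)"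
  by (auto simp: face_def orb_def fun_eq_iff)

lemma head_tail: "head opp nxt h = tail nxt (opp h)"
  by (simp add: head_def)

lemma inv_card:
  assumes "perm t S" and inv: "\<And>x. x \<in> S \<Longrightarrow> t (t x) = x \<and> t x \<noteq> x"
  shows "2 * cyc t S = card S"
proof -
  interpret perm t S by fact
  have o: "orb t x = {x, t x}" if "x \<in> S" for x
  proof
    have "(t ^^ k) x \<in> {x, t x}" for k
      by (induct k) (auto simp: inv that)
    then show "orb t x \<subseteq> {x, t x}" unfolding orb_def by auto
  qed auto
  have "2 * card (orb t ` S) = card (\<Union> (orb t ` S))"
  proof (rule card_partition)
    show "finite (orb t ` S)" using fin by simp
    show "finite (\<Union> (orb t ` S))" using fin finite_orb by blast
    show "card c = 2" if c_in: "c \<in> orb t ` S" for c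
    proof -
      obtain x where x: "x \<in> S" "c = orb t x" using c_in by blast
      have "t x \<noteq> x" using inv[OF x(1)] by blast
      then show ?thesis using o[OF x(1)] x(2) by simp
    qed
    show "\<And>c1 c2. c1 \<in> orb t ` S \<Longrightarrow> c2 \<in> orb t ` S \<Longrightarrow> c1 \<noteq> c2 \<Longrightarrow> c1 \<inter> c2 = {}"
      using orb_disj by blast
  qed
  moreover have "\<Union> (orb t ` S) = S" using orb_sub by auto
  ultimately show ?thesis unfolding cyc_def by simp
qed

locale pmap =
  fixes H :: "'a set" and opp nxt :: "'a \<Rightarrow> 'a"
  assumes pm: "plane_map H opp nxt"
begin

lemma finH: "finite H" using pm unfolding plane_map_def by blast
lemma opp_in: "h \<in> H \<Longrightarrow> opp h \<in> H" using pm unfolding plane_map_def by blast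
lemma opp_ne: "h \<in> H \<Longrightarrow> opp h \<noteq> h" using pm unfolding plane_map_def by blast
lemma opp_opp[simp]: "h \<in> H \<Longrightarrow> opp (opp h) = h" using pm unfolding plane_map_def by blast
lemma bij_nxt: "bij_betw nxt H H" using pm unfolding plane_map_def by blast
lemma connected: "h \<in> H \<Longrightarrow> h' \<in> H \<Longrightarrow>
   (h, h') \<in> ({(x, opp x) | x. x \<in> H} \<union> {(x, nxt x) | x. x \<in> H})\<^sup>*"
  using pm unfolding plane_map_def by blast
lemma euler: "int (card (vertices H nxt)) - int (card (edges H opp)) + int (card (faces H opp nxt)) = 2"
  using pm unfolding plane_map_def by blast

lemma bij_opp: "bij_betw opp H H"
proof (rule bij_betw_byWitness[where f'=opp])
  show "\<forall>a\<in>H. opp (opp a) = a" by simp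
  show "\<forall>a'\<in>H. opp (opp a') = a'" by simp
  show "opp ` H \<subseteq> H" using opp_in by blast
  show "opp ` H \<subseteq> H" using opp_in by blast
qed

lemma bij_phi: "bij_betw (phi opp nxt) H H"
  unfolding phi_def using bij_betw_trans[OF bij_opp bij_nxt] .

lemma nxt_in: "h \<in> H \<Longrightarrow> nxt h \<in> H"
  using bij_nxt by (auto simp: bij_betw_def)

sublocale N: perm nxt H using finH bij_nxt by unfold_locales
sublocale P: perm "phi opp nxt" H using finH bij_phi by unfold_locales
sublocale O: perm opp H using finH bij_opp by unfold_locales

lemma phi_app: "phi opp nxt h = nxt (opp h)" unfolding phi_def by simp

lemma phi_in: "h \<in> H \<Longrightarrow> phi opp nxt h \<in> H" by (simp add: phi_app nxt_in opp_in)

lemma face_nxt: "h \<in> H \<Longrightarrow> face opp nxt (nxt h) = face opp nxt (opp h)"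
proof -
  assume h: "h \<in> H"
  have "nxt h = phi opp nxt (opp h)" using h by (simp add: phi_app)
  then show ?thesis unfolding face_orb using P.orb_f_eq[OF opp_in[OF h]] by simp
qed

lemma tail_nxt: "h \<in> H \<Longrightarrow> tail nxt (nxt h) = tail nxt h"
  unfolding tail_orb by (rule N.orb_f_eq)

lemma tail_eqI: "h \<in> H \<Longrightarrow> g \<in> tail nxt h \<Longrightarrow> tail nxt g = tail nxt h"
  unfolding tail_orb by (rule N.orb_eq)

lemma tail_mem: "tail nxt g = tail nxt h \<Longrightarrow> g \<in> tail nxt h"
  unfolding tail_orb using orb_self[of g nxt] by simp

lemma tail_sub: "h \<in> H \<Longrightarrow> tail nxt h \<subseteq> H"
  unfolding tail_orb using N.orb_sub .

lemma face_sub: "h \<in> H \<Longrightarrow> face opp nxt h \<subseteq> H"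
  unfolding face_orb using P.orb_sub .

lemma face_eqI: "h \<in> H \<Longrightarrow> g \<in> face opp nxt h \<Longrightarrow> face opp nxt g = face opp nxt h"
  unfolding face_orb by (rule P.orb_eq)

lemma face_self: "h \<in> face opp nxt h"
  unfolding face_orb by simp

lemma edges_orb: "edges H opp = orb opp ` H"
proof -
  have "orb opp h = {h, opp h}" if "h \<in> H" for h
  proof
    have "(opp ^^ k) h \<in> {h, opp h}" for k
      by (induct k) (auto simp: that)
    then show "orb opp h \<subseteq> {h, opp h}" unfolding orb_def by auto
  qed auto
  then show ?thesis unfolding edges_def by (intro image_cong) simp_all
qed

lemma two_E: "2 * card (edges H opp) = card H"
proof -
  have "\<And>x. x \<in> H \<Longrightarrow> opp (opp x) = x \<and> opp x \<noteq> x" using opp_ne by simp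
  from inv_card[OF O.perm_axioms this] show ?thesis unfolding edges_orb cyc_def .
qed

lemma V_cyc: "card (vertices H nxt) = cyc nxt H"
  unfolding vertices_def cyc_def tail_orb ..

lemma F_cyc: "card (faces H opp nxt) = cyc (phi opp nxt) H"
  unfolding faces_def cyc_def face_orb ..

definition deg :: "'a \<Rightarrow> nat" where "deg h = card (tail nxt h)"

lemma deg_per: "h \<in> H \<Longrightarrow> deg h = per nxt h"
  unfolding deg_def tail_orb using N.card_orb .

lemma deg_pos: "h \<in> H \<Longrightarrow> 0 < deg h"
  using deg_per N.per_pos by metis

lemma nxt_deg: "h \<in> H \<Longrightarrow> (nxt ^^ deg h) h = h"
  using deg_per N.per_id by metis

lemma nxt_pow_mod: "h \<in> H \<Longrightarrow> (nxt ^^ m) h = (nxt ^^ (m mod deg h)) h"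
proof -
  assume h: "h \<in> H"
  show ?thesis unfolding deg_per[OF h] by (rule N.funpow_mod[OF h])
qed

lemma nxt_pow_inj: "h \<in> H \<Longrightarrow> i < deg h \<Longrightarrow> j < deg h \<Longrightarrow> (nxt ^^ i) h = (nxt ^^ j) h \<Longrightarrow> i = j"
proof -
  assume h: "h \<in> H" and ij: "i < deg h" "j < deg h" "(nxt ^^ i) h = (nxt ^^ j) h"
  have "inj_on (\<lambda>k. (nxt ^^ k) h) {..<deg h}" using N.per_inj[OF h] deg_per[OF h] by simp
  then show "i = j" using ij unfolding inj_on_def by blast
qed

lemma tail_pow: "h \<in> H \<Longrightarrow> g \<in> tail nxt h \<Longrightarrow> \<exists>k < deg h. (nxt ^^ k) h = g"
proof -
  assume h: "h \<in> H" and g: "g \<in> tail nxt h"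
  have "g \<in> (\<lambda>k. (nxt ^^ k) h) ` {..<deg h}" using g N.orb_per[OF h] deg_per[OF h] unfolding tail_orb by simp
  then show ?thesis by blast
qed

lemma cw_props:
  assumes h: "h \<in> H" and g: "g \<in> tail nxt h"
  shows "cw_dist nxt h g < deg h" "(nxt ^^ cw_dist nxt h g) h = g"
proof -
  obtain k where k: "k < deg h" "(nxt ^^ k) h = g" using tail_pow[OF h g] by blast
  show "(nxt ^^ cw_dist nxt h g) h = g" unfolding cw_dist_def by (rule LeastI[of _ k]) (rule k(2))
  have "cw_dist nxt h g \<le> k" unfolding cw_dist_def by (rule Least_le) (rule k(2))
  then show "cw_dist nxt h g < deg h" using k by simp
qed

lemma cw_iff:
  assumes h: "h \<in> H" and g: "g \<in> tail nxt h"
  shows "(nxt ^^ m) h = g \<longleftrightarrow> m mod deg h = cw_dist nxt h g"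
proof
  assume "(nxt ^^ m) h = g"
  then have "(nxt ^^ (m mod deg h)) h = (nxt ^^ cw_dist nxt h g) h"
    using cw_props[OF h g] nxt_pow_mod[OF h] by simp
  then show "m mod deg h = cw_dist nxt h g"
    using nxt_pow_inj[OF h] cw_props[OF h g] deg_pos[OF h] by simp
next
  assume "m mod deg h = cw_dist nxt h g"
  then have "(nxt ^^ m) h = (nxt ^^ cw_dist nxt h g) h" using nxt_pow_mod[OF h, of m] by simp
  then show "(nxt ^^ m) h = g" using cw_props(2)[OF h g] by simp
qed

lemma cw_self: "cw_dist nxt h h = 0"
  unfolding cw_dist_def by simp

lemma cw_zero: "h \<in> H \<Longrightarrow> g \<in> tail nxt h \<Longrightarrow> cw_dist nxt h g = 0 \<Longrightarrow> g = h"
proof -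
  assume h: "h \<in> H" and g: "g \<in> tail nxt h" and z: "cw_dist nxt h g = 0"
  show "g = h" using cw_props(2)[OF h g] z by simp
qed

lemma pow_in_tail: "(nxt ^^ m) h \<in> tail nxt h"
  unfolding tail_orb by simp

lemma deg_eq: "h \<in> H \<Longrightarrow> g \<in> tail nxt h \<Longrightarrow> deg g = deg h"
  unfolding deg_def using tail_eqI by simp

end

locale jc = pmap H opp nxt for H :: "'a set" and opp nxt +
  fixes Cd :: "'a set" and sc :: "'a \<Rightarrow> 'a" and c0 :: 'a
  assumes Cd_sub: "Cd \<subseteq> H"
    and sc_in: "c \<in> Cd \<Longrightarrow> sc c \<in> Cd"
    and sc_tail: "c \<in> Cd \<Longrightarrow> tail nxt (sc c) = tail nxt (opp c)"
    and tail_inj: "inj_on (tail nxt) Cd"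
    and sc_inj: "inj_on sc Cd"
    and c0: "c0 \<in> Cd" and single: "Cd \<subseteq> orb sc c0"
    and nondeg: "Cd \<inter> opp ` Cd = {}"
begin

definition Xd :: "'a set" where "Xd = opp ` Cd"
definition EC :: "'a set" where "EC = Cd \<union> Xd"

lemma finCd: "finite Cd" by (rule finite_subset[OF Cd_sub finH])

lemma sc_bij: "bij_betw sc Cd Cd"
proof -
  have "sc ` Cd \<subseteq> Cd" using sc_in by blast
  then have "sc ` Cd = Cd" using endo_inj_surj[OF finCd _ sc_inj] by blast
  then show ?thesis using sc_inj unfolding bij_betw_def by blast
qed

sublocale S: perm sc Cd using finCd sc_bij by unfold_locales

definition pre :: "'a \<Rightarrow> 'a" where "pre c = inv_into Cd sc c"

lemma pre_in: "c \<in> Cd \<Longrightarrow> pre c \<in> Cd"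
  unfolding pre_def using sc_bij by (metis bij_betw_def inv_into_into)

lemma sc_pre: "c \<in> Cd \<Longrightarrow> sc (pre c) = c"
  unfolding pre_def using sc_bij by (metis bij_betw_def f_inv_into_f)

lemma pre_sc: "c \<in> Cd \<Longrightarrow> pre (sc c) = c"
  unfolding pre_def using sc_inj by (simp add: inv_into_f_f)

definition xo :: "'a \<Rightarrow> 'a" where "xo c = opp (pre c)"

lemma Cd_H: "c \<in> Cd \<Longrightarrow> c \<in> H" using Cd_sub by blast

lemma Xd_H: "x \<in> Xd \<Longrightarrow> x \<in> H" unfolding Xd_def using Cd_sub opp_in by blast

lemma EC_H: "e \<in> EC \<Longrightarrow> e \<in> H" unfolding EC_def using Cd_H Xd_H by blast

lemma xo_Xd: "c \<in> Cd \<Longrightarrow> xo c \<in> Xd" unfolding xo_def Xd_def using pre_in by blast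

lemma xo_tail: "c \<in> Cd \<Longrightarrow> tail nxt (xo c) = tail nxt c"
  unfolding xo_def using sc_tail[OF pre_in] sc_pre by metis

lemma Cd_Xd_disj: "c \<in> Cd \<Longrightarrow> c \<notin> Xd" unfolding Xd_def using nondeg by blast

lemma xo_ne: "c \<in> Cd \<Longrightarrow> xo c \<noteq> c" using xo_Xd Cd_Xd_disj by metis

lemma opp_Cd: "c \<in> Cd \<Longrightarrow> opp c \<in> Xd" unfolding Xd_def by blast

lemma opp_Xd: "x \<in> Xd \<Longrightarrow> opp x \<in> Cd" unfolding Xd_def using Cd_H opp_opp by auto

lemma opp_EC: "e \<in> EC \<Longrightarrow> opp e \<in> EC" unfolding EC_def using opp_Cd opp_Xd by blast

lemma xo_sc: "c \<in> Cd \<Longrightarrow> xo (sc c) = opp c" unfolding xo_def using pre_sc by simp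

lemma Xd_xo: "x \<in> Xd \<Longrightarrow> \<exists>c\<in>Cd. x = xo c"
proof -
  assume "x \<in> Xd"
  then obtain c' where c': "c' \<in> Cd" "x = opp c'" unfolding Xd_def by blast
  then show ?thesis using xo_sc[OF c'(1)] sc_in[OF c'(1)] by metis
qed

lemma EC_at:
  assumes e: "e \<in> EC" and c: "c \<in> Cd" and t: "tail nxt e = tail nxt c"
  shows "e = c \<or> e = xo c"
proof (cases "e \<in> Cd")
  case True then show ?thesis using tail_inj t c unfolding inj_on_def by blast
next
  case False
  then have "e \<in> Xd" using e unfolding EC_def by blast
  then obtain c' where c': "c' \<in> Cd" "e = xo c'" using Xd_xo by blast
  then have "tail nxt c' = tail nxt c" using xo_tail t by metis
  then have "c' = c" using tail_inj c c' unfolding inj_on_def by blast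
  then show ?thesis using c' by blast
qed

definition partner :: "'a \<Rightarrow> 'a" where
  "partner h = (if h \<in> Cd then xo h else sc (opp h))"

lemma partner_Cd: "c \<in> Cd \<Longrightarrow> partner c = xo c" unfolding partner_def by simp

lemma partner_Xd: "x \<in> Xd \<Longrightarrow> partner x = sc (opp x)"
  unfolding partner_def using Cd_Xd_disj by auto

lemma partner_in: "e \<in> EC \<Longrightarrow> partner e \<in> EC"
  unfolding EC_def using partner_Cd partner_Xd xo_Xd sc_in opp_Xd by auto

lemma partner_tail: "e \<in> EC \<Longrightarrow> tail nxt (partner e) = tail nxt e"
proof -
  assume e: "e \<in> EC"
  show ?thesis
  proof (cases "e \<in> Cd")
    case True then show ?thesis using partner_Cd xo_tail by simp
  next
    case False
    then have x: "e \<in> Xd" using e unfolding EC_def by blast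
    then have "opp e \<in> Cd" using opp_Xd by blast
    then show ?thesis using partner_Xd[OF x] sc_tail Xd_H[OF x] by simp
  qed
qed

lemma partner_partner: "e \<in> EC \<Longrightarrow> partner (partner e) = e"
proof -
  assume e: "e \<in> EC"
  show ?thesis
  proof (cases "e \<in> Cd")
    case True
    then have "partner (partner e) = sc (opp (xo e))" using partner_Cd partner_Xd xo_Xd by simp
    also have "\<dots> = e" unfolding xo_def using True pre_in Cd_H sc_pre by simp
    finally show ?thesis .
  next
    case False
    then have x: "e \<in> Xd" using e unfolding EC_def by blast
    then have c: "opp e \<in> Cd" using opp_Xd by blast
    have "partner (partner e) = xo (sc (opp e))" using partner_Xd[OF x] partner_Cd sc_in[OF c] by simp
    also have "\<dots> = e" using xo_sc[OF c] Xd_H[OF x] by simp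
    finally show ?thesis .
  qed
qed

lemma partner_ne: "e \<in> EC \<Longrightarrow> partner e \<noteq> e"
proof -
  assume e: "e \<in> EC"
  show ?thesis
  proof (cases "e \<in> Cd")
    case True then show ?thesis using partner_Cd xo_ne by simp
  next
    case False
    then have x: "e \<in> Xd" using e unfolding EC_def by blast
    then have "partner e \<in> Cd" using partner_Xd opp_Xd sc_in by simp
    then show ?thesis using False by metis
  qed
qed

lemma partner_Cd_iff: "e \<in> EC \<Longrightarrow> partner e \<in> Cd \<longleftrightarrow> e \<notin> Cd"
proof -
  assume e: "e \<in> EC"
  show ?thesis
  proof (cases "e \<in> Cd")
    case True then show ?thesis using partner_Cd xo_Xd Cd_Xd_disj by metis
  next
    case False
    then have x: "e \<in> Xd" using e unfolding EC_def by blast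
    then show ?thesis using partner_Xd opp_Xd sc_in False by simp
  qed
qed

lemma finEC: "finite EC"
proof (rule finite_subset[OF _ finH])
  show "EC \<subseteq> H" using EC_H by blast
qed

lemma card_EC: "card EC = 2 * card Cd"
proof -
  have "inj_on opp Cd" using inj_on_subset[OF O.inj Cd_sub] .
  then have "card Xd = card Cd" unfolding Xd_def by (rule card_image)
  moreover have "Cd \<inter> Xd = {}" using Cd_Xd_disj by blast
  moreover have "finite Xd" using finCd unfolding Xd_def by simp
  ultimately show ?thesis unfolding EC_def using finCd by (simp add: card_Un_disjoint)
qed

lemma EC_tail: "e \<in> EC \<Longrightarrow> \<exists>c\<in>Cd. tail nxt e = tail nxt c"
proof -
  assume e: "e \<in> EC"
  show ?thesis
  proof (cases "e \<in> Cd")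
    case True then show ?thesis by blast
  next
    case False
    then have "e \<in> Xd" using e unfolding EC_def by blast
    then obtain c where c: "c \<in> Cd" "e = xo c" using Xd_xo by blast
    have "tail nxt e = tail nxt c" using xo_tail[OF c(1)] c(2) by simp
    then show ?thesis using c(1) by blast
  qed
qed

definition px :: "'a \<Rightarrow> nat" where "px c = cw_dist nxt c (xo c)"

lemma xo_in_tail: "c \<in> Cd \<Longrightarrow> xo c \<in> tail nxt c"
  using xo_tail tail_mem by simp

lemma px_props:
  assumes c: "c \<in> Cd"
  shows "0 < px c" "px c < deg c" "(nxt ^^ px c) c = xo c"
proof -
  show "px c < deg c" "(nxt ^^ px c) c = xo c"
    unfolding px_def using cw_props[OF Cd_H[OF c] xo_in_tail[OF c]] by auto
  show "0 < px c"
  proof (rule ccontr)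
    assume "\<not> 0 < px c"
    then have "(nxt ^^ 0) c = xo c" using \<open>(nxt ^^ px c) c = xo c\<close> by simp
    then show False using xo_ne[OF c] by simp
  qed
qed

lemma not_EC_pos:
  assumes c: "c \<in> Cd" and m: "0 < m" "m < deg c" "m \<noteq> px c"
  shows "(nxt ^^ m) c \<notin> EC"
proof
  assume e: "(nxt ^^ m) c \<in> EC"
  have t: "tail nxt ((nxt ^^ m) c) = tail nxt c"
    using tail_eqI[OF Cd_H[OF c] pow_in_tail] .
  have h: "c \<in> H" using Cd_H[OF c] .
  from EC_at[OF e c t] show False
  proof
    assume "(nxt ^^ m) c = c"
    then have "(nxt ^^ m) c = (nxt ^^ 0) c" by simp
    then show False using nxt_pow_inj[OF h m(2)] deg_pos[OF h] m(1) by fastforce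
  next
    assume "(nxt ^^ m) c = xo c"
    then have "(nxt ^^ m) c = (nxt ^^ px c) c" using px_props(3)[OF c] by simp
    then show False using nxt_pow_inj[OF h m(2) px_props(2)[OF c]] m(3) by blast
  qed
qed

lemma pow_H: "h \<in> H \<Longrightarrow> (nxt ^^ m) h \<in> H" using N.funpow_in .

end

context jc begin

definition D2 :: "('a \<times> bool) set" where
  "D2 = (\<lambda>h. (h, False)) ` H \<union> (\<lambda>h. (h, True)) ` EC"

definition opp2 :: "'a \<times> bool \<Rightarrow> 'a \<times> bool" where
  "opp2 p = (opp (fst p), if fst p \<in> EC then \<not> snd p else snd p)"

definition nxt2 :: "'a \<times> bool \<Rightarrow> 'a \<times> bool" where
  "nxt2 p = (if fst p \<in> EC \<and> \<not> snd p then (partner (fst p), True) else (nxt (fst p), False))"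

lemma D2_F: "(h, False) \<in> D2 \<longleftrightarrow> h \<in> H" unfolding D2_def by auto
lemma D2_T: "(h, True) \<in> D2 \<longleftrightarrow> h \<in> EC" unfolding D2_def by auto

lemma D2_cases: "p \<in> D2 \<Longrightarrow> (\<And>h. p = (h, False) \<Longrightarrow> h \<in> H \<Longrightarrow> P) \<Longrightarrow> (\<And>e. p = (e, True) \<Longrightarrow> e \<in> EC \<Longrightarrow> P) \<Longrightarrow> P"
  unfolding D2_def by blast

lemma D2_fstH: "p \<in> D2 \<Longrightarrow> fst p \<in> H"
  by (erule D2_cases) (auto simp: EC_H)

lemma finD2: "finite D2" unfolding D2_def using finH finEC by simp

lemma card_D2: "card D2 = card H + card EC"
proof -
  have "card ((\<lambda>h. (h, False)) ` H) = card H" by (rule card_image) (simp add: inj_on_def)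
  moreover have "card ((\<lambda>h. (h, True)) ` EC) = card EC" by (rule card_image) (simp add: inj_on_def)
  moreover have "(\<lambda>h. (h, False)) ` H \<inter> (\<lambda>h. (h, True)) ` EC = {}" by auto
  ultimately show ?thesis unfolding D2_def using finH finEC by (simp add: card_Un_disjoint)
qed

lemma opp_EC_iff: "h \<in> H \<Longrightarrow> opp h \<in> EC \<longleftrightarrow> h \<in> EC"
  using opp_EC opp_opp by metis

lemma opp2_F: "h \<in> H \<Longrightarrow> h \<notin> EC \<Longrightarrow> opp2 (h, False) = (opp h, False)"
  unfolding opp2_def by simp
lemma opp2_FE: "h \<in> EC \<Longrightarrow> opp2 (h, False) = (opp h, True)"
  unfolding opp2_def by simp
lemma opp2_T: "h \<in> EC \<Longrightarrow> opp2 (h, True) = (opp h, False)"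
  unfolding opp2_def by simp

lemma nxt2_F: "h \<notin> EC \<Longrightarrow> nxt2 (h, False) = (nxt h, False)"
  unfolding nxt2_def by simp
lemma nxt2_FE: "h \<in> EC \<Longrightarrow> nxt2 (h, False) = (partner h, True)"
  unfolding nxt2_def by simp
lemma nxt2_T: "nxt2 (h, True) = (nxt h, False)"
  unfolding nxt2_def by simp

lemma opp2_in: "p \<in> D2 \<Longrightarrow> opp2 p \<in> D2"
proof (erule D2_cases)
  fix h assume p: "p = (h, False)" and h: "h \<in> H"
  show "opp2 p \<in> D2"
  proof (cases "h \<in> EC")
    case True then show ?thesis using p opp2_FE opp_EC D2_T by simp
  next
    case False then show ?thesis using p h opp2_F opp_in D2_F by simp
  qed
next
  fix e assume "p = (e, True)" "e \<in> EC"
  then show "opp2 p \<in> D2" using opp2_T opp_in EC_H D2_F by simp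
qed

lemma opp2_opp2: "p \<in> D2 \<Longrightarrow> opp2 (opp2 p) = p"
proof (erule D2_cases)
  fix h assume p: "p = (h, False)" and h: "h \<in> H"
  show "opp2 (opp2 p) = p"
  proof (cases "h \<in> EC")
    case True then show ?thesis using p opp2_FE opp_EC opp2_T h by simp
  next
    case False
    then have "opp h \<notin> EC" using opp_EC_iff h by simp
    then show ?thesis using p h opp2_F opp_in False by simp
  qed
next
  fix e assume "p = (e, True)" "e \<in> EC"
  then show "opp2 (opp2 p) = p" using opp2_T opp2_FE opp_EC EC_H by simp
qed

lemma opp2_ne: "p \<in> D2 \<Longrightarrow> opp2 p \<noteq> p"
proof -
  assume "p \<in> D2"
  then have "opp (fst p) \<noteq> fst p" using opp_ne D2_fstH by blast
  then show ?thesis unfolding opp2_def by (cases p) auto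
qed

lemma bij_opp2: "bij_betw opp2 D2 D2"
  by (rule bij_betw_byWitness[where f'=opp2]) (auto simp: opp2_opp2 opp2_in)

lemma nxt2_in: "p \<in> D2 \<Longrightarrow> nxt2 p \<in> D2"
proof (erule D2_cases)
  fix h assume p: "p = (h, False)" and h: "h \<in> H"
  show "nxt2 p \<in> D2"
  proof (cases "h \<in> EC")
    case True then show ?thesis using p nxt2_FE partner_in D2_T by simp
  next
    case False then show ?thesis using p h nxt2_F nxt_in D2_F by simp
  qed
next
  fix e assume "p = (e, True)" "e \<in> EC"
  then show "nxt2 p \<in> D2" using nxt2_T nxt_in EC_H D2_F by simp
qed

lemma nxt2_surj: "D2 \<subseteq> nxt2 ` D2"
proof
  fix q assume "q \<in> D2"
  then show "q \<in> nxt2 ` D2"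
  proof (rule D2_cases)
    fix g assume q: "q = (g, False)" and g: "g \<in> H"
    have "g \<in> nxt ` H" using bij_nxt g by (simp add: bij_betw_def)
    then obtain h where h: "h \<in> H" "nxt h = g" by auto
    show ?thesis
    proof (cases "h \<in> EC")
      case True
      then have "nxt2 (h, True) = q" using nxt2_T q h by simp
      moreover have "(h, True) \<in> D2" using True D2_T by simp
      ultimately show ?thesis by blast
    next
      case False
      then have "nxt2 (h, False) = q" using nxt2_F q h by simp
      moreover have "(h, False) \<in> D2" using h D2_F by simp
      ultimately show ?thesis by blast
    qed
  next
    fix e assume q: "q = (e, True)" and e: "e \<in> EC"
    have "nxt2 (partner e, False) = q" using nxt2_FE[OF partner_in[OF e]] partner_partner[OF e] q by simp
    moreover have "(partner e, False) \<in> D2" using D2_F EC_H partner_in e by simp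
    ultimately show ?thesis by blast
  qed
qed

lemma bij_nxt2: "bij_betw nxt2 D2 D2"
proof -
  have im: "nxt2 ` D2 = D2" using nxt2_surj nxt2_in by blast
  then have "card (nxt2 ` D2) = card D2" by simp
  then have "inj_on nxt2 D2" using inj_on_iff_eq_card[OF finD2] by blast
  then show ?thesis using im unfolding bij_betw_def by blast
qed

definition phi2 :: "'a \<times> bool \<Rightarrow> 'a \<times> bool" where "phi2 = nxt2 \<circ> opp2"

lemma phi2_F: "h \<in> H \<Longrightarrow> phi2 (h, False) = (phi opp nxt h, False)"
proof -
  assume h: "h \<in> H"
  show ?thesis
  proof (cases "h \<in> EC")
    case True then show ?thesis unfolding phi2_def using opp2_FE nxt2_T phi_app by simp
  next
    case False
    then have "opp h \<notin> EC" using opp_EC_iff h by simp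
    then show ?thesis unfolding phi2_def using False opp2_F h nxt2_F phi_app by simp
  qed
qed

lemma phi2_T: "e \<in> EC \<Longrightarrow> phi2 (e, True) = (partner (opp e), True)"
  unfolding phi2_def using opp2_T nxt2_FE opp_EC by simp

lemma bij_phi2: "bij_betw phi2 D2 D2"
  unfolding phi2_def using bij_betw_trans[OF bij_opp2 bij_nxt2] .

lemma perm_opp2: "perm opp2 D2" using finD2 bij_opp2 by unfold_locales
lemma perm_nxt2: "perm nxt2 D2" using finD2 bij_nxt2 by unfold_locales
lemma perm_phi2: "perm phi2 D2" using finD2 bij_phi2 by unfold_locales

lemma cyc_opp2: "2 * cyc opp2 D2 = card D2"
proof (rule inv_card[OF perm_opp2])
  fix x assume "x \<in> D2" then show "opp2 (opp2 x) = x \<and> opp2 x \<noteq> x" using opp2_opp2 opp2_ne by simp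
qed

lemma phi2_pow_F: "h \<in> H \<Longrightarrow> (phi2 ^^ k) (h, False) = ((phi opp nxt ^^ k) h, False)"
proof (induct k)
  case (Suc k)
  have "(phi opp nxt ^^ k) h \<in> H" using P.funpow_in[OF Suc.prems] .
  then show ?case using Suc phi2_F by simp
qed simp

lemma orb_phi2_F: "h \<in> H \<Longrightarrow> orb phi2 (h, False) = (\<lambda>g. (g, False)) ` orb (phi opp nxt) h"
proof -
  assume h: "h \<in> H"
  have "orb phi2 (h, False) = (\<lambda>k. (phi2 ^^ k) (h, False)) ` UNIV" unfolding orb_def by auto
  also have "\<dots> = (\<lambda>k. ((phi opp nxt ^^ k) h, False)) ` UNIV" using phi2_pow_F[OF h] by simp
  also have "\<dots> = (\<lambda>g. (g, False)) ` orb (phi opp nxt) h" unfolding orb_def by auto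
  finally show ?thesis .
qed


lemma nxt2_tail: "p \<in> D2 \<Longrightarrow> tail nxt (fst (nxt2 p)) = tail nxt (fst p)"
proof (erule D2_cases)
  fix h assume p: "p = (h, False)" and h: "h \<in> H"
  show ?thesis
  proof (cases "h \<in> EC")
    case True then show ?thesis using p nxt2_FE partner_tail by simp
  next
    case False then show ?thesis using p nxt2_F tail_nxt h by simp
  qed
next
  fix e assume "p = (e, True)" "e \<in> EC"
  then show ?thesis using nxt2_T tail_nxt EC_H by simp
qed

lemma orb_nxt2_tail: "p \<in> D2 \<Longrightarrow> q \<in> orb nxt2 p \<Longrightarrow> tail nxt (fst q) = tail nxt (fst p)"
proof -
  assume p: "p \<in> D2" and q: "q \<in> orb nxt2 p"
  have "orb nxt2 p \<subseteq> {q \<in> D2. tail nxt (fst q) = tail nxt (fst p)}"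
  proof (rule orb_closed)
    fix y assume "y \<in> {q \<in> D2. tail nxt (fst q) = tail nxt (fst p)}"
    then show "nxt2 y \<in> {q \<in> D2. tail nxt (fst q) = tail nxt (fst p)}"
      using nxt2_in nxt2_tail by simp
  qed (use p in simp)
  then show ?thesis using q by blast
qed

lemma Bpart: assumes c: "c \<in> Cd" shows "(c, True) \<notin> orb nxt2 (c, False)"
proof
  define B where "B = insert (xo c, True) {((nxt ^^ m) c, False) | m. px c < m \<and> m \<le> deg c}"
  have h: "c \<in> H" using Cd_H[OF c] .
  have cB: "(c, False) \<in> B" unfolding B_def using nxt_deg[OF h] px_props[OF c]
    by (auto intro!: exI[of _ "deg c"])
  have clo: "nxt2 y \<in> B" if y: "y \<in> B" for y
  proof -
    from y have "y = (xo c, True) \<or> (\<exists>m. y = ((nxt ^^ m) c, False) \<and> px c < m \<and> m \<le> deg c)"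
      unfolding B_def by blast
    then show ?thesis
    proof
      assume "y = (xo c, True)"
      then have "nxt2 y = ((nxt ^^ Suc (px c)) c, False)" using nxt2_T px_props(3)[OF c] by simp
      then show ?thesis unfolding B_def using px_props(2)[OF c] by (auto intro!: exI[of _ "Suc (px c)"])
    next
      assume "\<exists>m. y = ((nxt ^^ m) c, False) \<and> px c < m \<and> m \<le> deg c"
      then obtain m where m: "y = ((nxt ^^ m) c, False)" "px c < m" "m \<le> deg c" by blast
      show ?thesis
      proof (cases "m = deg c")
        case True
        then have "y = (c, False)" using m nxt_deg[OF h] by simp
        then have "nxt2 y = (xo c, True)" using nxt2_FE partner_Cd c unfolding EC_def by simp
        then show ?thesis unfolding B_def by simp
      next
        case False
        then have "(nxt ^^ m) c \<notin> EC" using not_EC_pos[OF c] m px_props(1)[OF c] by simp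
        then have "nxt2 y = ((nxt ^^ Suc m) c, False)" using m nxt2_F by simp
        then show ?thesis unfolding B_def using m False by (auto intro!: exI[of _ "Suc m"])
      qed
    qed
  qed
  have "orb nxt2 (c, False) \<subseteq> B" by (rule orb_closed[OF clo cB])
  moreover assume "(c, True) \<in> orb nxt2 (c, False)"
  ultimately have "(c, True) \<in> B" by blast
  then show False unfolding B_def using xo_ne[OF c] by auto
qed

definition rep :: "'a set \<Rightarrow> 'a" where
  "rep v = (SOME h. h \<in> H \<and> tail nxt h = v \<and> (v \<in> tail nxt ` Cd \<longrightarrow> h \<in> Cd))"

lemma rep_props:
  assumes v: "v \<in> vertices H nxt"
  shows "rep v \<in> H" "tail nxt (rep v) = v" "v \<in> tail nxt ` Cd \<Longrightarrow> rep v \<in> Cd"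
proof -
  have ex: "\<exists>h. h \<in> H \<and> tail nxt h = v \<and> (v \<in> tail nxt ` Cd \<longrightarrow> h \<in> Cd)"
  proof (cases "v \<in> tail nxt ` Cd")
    case True
    then obtain c where "c \<in> Cd" "v = tail nxt c" by blast
    then show ?thesis using Cd_H by blast
  next
    case False
    obtain h where "h \<in> H" "v = tail nxt h" using v unfolding vertices_def by blast
    then show ?thesis using False by blast
  qed
  have "rep v \<in> H \<and> tail nxt (rep v) = v \<and> (v \<in> tail nxt ` Cd \<longrightarrow> rep v \<in> Cd)"
    unfolding rep_def by (rule someI_ex[OF ex])
  then show "rep v \<in> H" "tail nxt (rep v) = v" "v \<in> tail nxt ` Cd \<Longrightarrow> rep v \<in> Cd" by auto
qed

lemma cyc_nxt2: "card (vertices H nxt) + card Cd \<le> cyc nxt2 D2"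
proof -
  interpret Q: perm nxt2 D2 by (rule perm_nxt2)
  define Dom where "Dom = Inl ` vertices H nxt \<union> Inr ` Cd"
  define psi where "psi z = (case z of Inl v \<Rightarrow> orb nxt2 (rep v, False) | Inr c \<Rightarrow> orb nxt2 (c, True))" for z
  have finV: "finite (vertices H nxt)" unfolding vertices_def using finH by simp
  have cDom: "card Dom = card (vertices H nxt) + card Cd"
  proof -
    have "card (Inl ` vertices H nxt :: ('a set + 'a) set) = card (vertices H nxt)" by (rule card_image) simp
    moreover have "card (Inr ` Cd :: ('a set + 'a) set) = card Cd" by (rule card_image) simp
    moreover have "(Inl ` vertices H nxt :: ('a set + 'a) set) \<inter> Inr ` Cd = {}" by blast
    ultimately show ?thesis unfolding Dom_def using finV finCd by (simp add: card_Un_disjoint)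
  qed
  have sub: "psi ` Dom \<subseteq> orb nxt2 ` D2"
  proof
    fix X assume "X \<in> psi ` Dom"
    then obtain z where z: "z \<in> Dom" "X = psi z" by blast
    show "X \<in> orb nxt2 ` D2"
    proof (cases z)
      case (Inl v)
      then have "v \<in> vertices H nxt" using z unfolding Dom_def by auto
      then have "(rep v, False) \<in> D2" using rep_props D2_F by simp
      then show ?thesis using z Inl unfolding psi_def by simp
    next
      case (Inr c)
      then have "c \<in> Cd" using z unfolding Dom_def by auto
      then have "(c, True) \<in> D2" using D2_T unfolding EC_def by simp
      then show ?thesis using z Inr unfolding psi_def by simp
    qed
  qed
  have key: "tail nxt (fst q) = tail nxt (fst p)" if "p \<in> D2" "q \<in> D2" "orb nxt2 p = orb nxt2 q" for p q
  proof -
    have "q \<in> orb nxt2 p" using that(3) orb_self[of q nxt2] by simp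
    from orb_nxt2_tail[OF that(1) this] show ?thesis .
  qed
  have inj: "inj_on psi Dom"
  proof (rule inj_onI)
    fix z1 z2 assume z1: "z1 \<in> Dom" and z2: "z2 \<in> Dom" and eq: "psi z1 = psi z2"
    show "z1 = z2"
    proof (cases z1)
      case (Inl v)
      then have v: "v \<in> vertices H nxt" using z1 unfolding Dom_def by auto
      have pv: "(rep v, False) \<in> D2" using rep_props[OF v] D2_F by simp
      show ?thesis
      proof (cases z2)
        case (Inl w)
        then have w: "w \<in> vertices H nxt" using z2 unfolding Dom_def by auto
        have pw: "(rep w, False) \<in> D2" using rep_props[OF w] D2_F by simp
        have "orb nxt2 (rep v, False) = orb nxt2 (rep w, False)" using eq \<open>z1 = Inl v\<close> Inl unfolding psi_def by simp
        then have "tail nxt (rep w) = tail nxt (rep v)" using key[OF pv pw] by simp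
        then show ?thesis using rep_props(2)[OF v] rep_props(2)[OF w] \<open>z1 = Inl v\<close> Inl by simp
      next
        case (Inr c)
        then have c: "c \<in> Cd" using z2 unfolding Dom_def by auto
        have pc: "(c, True) \<in> D2" using D2_T c unfolding EC_def by simp
        have e: "orb nxt2 (rep v, False) = orb nxt2 (c, True)" using eq \<open>z1 = Inl v\<close> Inr unfolding psi_def by simp
        then have "tail nxt c = v" using key[OF pv pc] rep_props(2)[OF v] by simp
        then have "v \<in> tail nxt ` Cd" using c by blast
        then have "rep v \<in> Cd" using rep_props(3)[OF v] by simp
        moreover have "tail nxt (rep v) = tail nxt c" using rep_props(2)[OF v] \<open>tail nxt c = v\<close> by simp
        ultimately have "rep v = c" using inj_onD[OF tail_inj] c by blast
        then have "(c, True) \<in> orb nxt2 (c, False)" using e orb_self[of "(c, True)" nxt2] by simp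
        then show ?thesis using Bpart[OF c] by simp
      qed
    next
      case (Inr c)
      then have c: "c \<in> Cd" using z1 unfolding Dom_def by auto
      have pc: "(c, True) \<in> D2" using D2_T c unfolding EC_def by simp
      show ?thesis
      proof (cases z2)
        case (Inl v)
        then have v: "v \<in> vertices H nxt" using z2 unfolding Dom_def by auto
        have pv: "(rep v, False) \<in> D2" using rep_props[OF v] D2_F by simp
        have e: "orb nxt2 (rep v, False) = orb nxt2 (c, True)" using eq \<open>z1 = Inr c\<close> Inl unfolding psi_def by simp
        then have "tail nxt c = v" using key[OF pv pc] rep_props(2)[OF v] by simp
        then have "v \<in> tail nxt ` Cd" using c by blast
        then have "rep v \<in> Cd" using rep_props(3)[OF v] by simp
        moreover have "tail nxt (rep v) = tail nxt c" using rep_props(2)[OF v] \<open>tail nxt c = v\<close> by simp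
        ultimately have "rep v = c" using inj_onD[OF tail_inj] c by blast
        then have "(c, True) \<in> orb nxt2 (c, False)" using e orb_self[of "(c, True)" nxt2] by simp
        then show ?thesis using Bpart[OF c] by simp
      next
        case (Inr c')
        then have c': "c' \<in> Cd" using z2 unfolding Dom_def by auto
        have pc': "(c', True) \<in> D2" using D2_T c' unfolding EC_def by simp
        have "orb nxt2 (c, True) = orb nxt2 (c', True)" using eq \<open>z1 = Inr c\<close> Inr unfolding psi_def by simp
        then have "tail nxt c' = tail nxt c" using key[OF pc pc'] by simp
        then have "c = c'" using inj_onD[OF tail_inj] c c' by metis
        then show ?thesis using \<open>z1 = Inr c\<close> Inr by simp
      qed
    qed
  qed
  have "card Dom = card (psi ` Dom)" using card_image[OF inj] by simp
  also have "\<dots> \<le> card (orb nxt2 ` D2)" by (rule card_mono[OF _ sub]) (use finD2 in simp)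
  finally show ?thesis using cDom unfolding cyc_def by simp
qed

lemma cyc_phi2: "card (faces H opp nxt) + 2 \<le> cyc phi2 D2"
proof -
  interpret Q: perm phi2 D2 by (rule perm_phi2)
  define Set1 where "Set1 = (\<lambda>h. orb phi2 (h, False)) ` H"
  define O1 where "O1 = orb phi2 (c0, True)"
  define O2 where "O2 = orb phi2 (xo c0, True)"
  have c0E: "c0 \<in> EC" using c0 unfolding EC_def by simp
  have x0E: "xo c0 \<in> EC" using xo_Xd[OF c0] unfolding EC_def by simp
  have S1: "Set1 = (\<lambda>Y. (\<lambda>g. (g, False)) ` Y) ` (orb (phi opp nxt) ` H)"
    unfolding Set1_def image_image using orb_phi2_F by (intro image_cong) simp_all
  have cS1: "card Set1 = card (faces H opp nxt)"
  proof -
    have "inj_on (\<lambda>Y. (\<lambda>g. (g, False)) ` Y) (orb (phi opp nxt) ` H)"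
      by (rule inj_onI) (auto simp: image_iff set_eq_iff)
    then show ?thesis unfolding S1 F_cyc cyc_def by (rule card_image)
  qed
  have O1sub: "O1 \<subseteq> {(c, True) | c. c \<in> Cd}" unfolding O1_def
  proof (rule orb_closed)
    fix y assume "y \<in> {(c, True) | c. c \<in> Cd}"
    then obtain c where c: "c \<in> Cd" "y = (c, True)" by blast
    then have "phi2 y = (sc c, True)" using phi2_T partner_Xd opp_Cd Cd_H unfolding EC_def by simp
    then show "phi2 y \<in> {(c, True) | c. c \<in> Cd}" using sc_in[OF c(1)] by simp
  qed (use c0 in simp)
  have O2sub: "O2 \<subseteq> {(x, True) | x. x \<in> Xd}" unfolding O2_def
  proof (rule orb_closed)
    fix y assume "y \<in> {(x, True) | x. x \<in> Xd}"
    then obtain x where x: "x \<in> Xd" "y = (x, True)" by blast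
    then have "phi2 y = (xo (opp x), True)" using phi2_T partner_Cd opp_Xd unfolding EC_def by simp
    then show "phi2 y \<in> {(x, True) | x. x \<in> Xd}" using xo_Xd opp_Xd x(1) by simp
  qed (use xo_Xd[OF c0] in simp)
  have S1F: "X \<subseteq> {(g, False) | g. True}" if "X \<in> Set1" for X
    using that unfolding S1 by auto
  have O1n: "O1 \<notin> Set1" using S1F[of O1] orb_self[of "(c0, True)" phi2] unfolding O1_def by blast
  have O2n: "O2 \<notin> Set1" using S1F[of O2] orb_self[of "(xo c0, True)" phi2] unfolding O2_def by blast
  have O12: "O1 \<noteq> O2" using O2sub orb_self[of "(c0, True)" phi2] Cd_Xd_disj[OF c0] unfolding O1_def by blast
  have sub: "Set1 \<union> {O1, O2} \<subseteq> orb phi2 ` D2"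
    unfolding Set1_def O1_def O2_def using D2_F D2_T c0E x0E by auto
  have finS1: "finite Set1" unfolding Set1_def using finH by simp
  have "card (Set1 \<union> {O1, O2}) = card Set1 + 2"
    using O1n O2n O12 finS1 by (simp add: card_insert_if)
  moreover have "card (Set1 \<union> {O1, O2}) \<le> card (orb phi2 ` D2)"
    by (rule card_mono) (use finD2 sub in auto)
  ultimately show ?thesis using cS1 unfolding cyc_def by simp
qed

end

context jc begin

definition adj :: "('a set \<times> 'a set) set" where
  "adj = {(face opp nxt h, face opp nxt (opp h)) | h. h \<in> H \<and> h \<notin> EC}"

definition Fx :: "'a set set" where "Fx = {f. \<exists>x\<in>Xd. (face opp nxt x, f) \<in> adj\<^sup>*}"
definition Fc :: "'a set set" where "Fc = {f. \<exists>c\<in>Cd. (face opp nxt c, f) \<in> adj\<^sup>*}"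

abbreviation "R2 \<equiv> conn nxt2 opp2 D2"

lemma R_opp2: "p \<in> D2 \<Longrightarrow> (p, opp2 p) \<in> R2" by (rule conn_t)
lemma R_nxt2: "p \<in> D2 \<Longrightarrow> (p, nxt2 p) \<in> R2" by (rule conn_s)

lemma R_phi2: "p \<in> D2 \<Longrightarrow> (p, phi2 p) \<in> R2"
proof -
  assume p: "p \<in> D2"
  have "(p, opp2 p) \<in> R2" using R_opp2[OF p] .
  moreover have "(opp2 p, nxt2 (opp2 p)) \<in> R2" using R_nxt2[OF opp2_in[OF p]] .
  ultimately show ?thesis unfolding phi2_def using conn_trans by fastforce
qed

lemma R_phi2_pow: "p \<in> D2 \<Longrightarrow> (p, (phi2 ^^ k) p) \<in> R2"
proof (induct k)
  case (Suc k)
  interpret Q: perm phi2 D2 by (rule perm_phi2)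
  have "(phi2 ^^ k) p \<in> D2" using Q.funpow_in[OF Suc.prems] .
  then have "((phi2 ^^ k) p, phi2 ((phi2 ^^ k) p)) \<in> R2" by (rule R_phi2)
  then show ?case using Suc conn_trans by fastforce
qed simp

lemma face_conn: "h \<in> H \<Longrightarrow> g \<in> face opp nxt h \<Longrightarrow> ((h, False), (g, False)) \<in> R2"
proof -
  assume h: "h \<in> H" and g: "g \<in> face opp nxt h"
  then obtain k where k: "g = (phi opp nxt ^^ k) h" unfolding face_orb orb_def by auto
  have "(phi2 ^^ k) (h, False) = (g, False)" using phi2_pow_F[OF h] k by simp
  then show ?thesis using R_phi2_pow[of "(h, False)" k] h D2_F by simp
qed

lemma adj_conn:
  assumes "(face opp nxt e, f) \<in> adj\<^sup>*" and e: "e \<in> H"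
  shows "\<And>g. g \<in> f \<Longrightarrow> ((e, False), (g, False)) \<in> R2"
  using assms(1)
proof (induct rule: rtrancl_induct)
  case base then show ?case using face_conn[OF e] by simp
next
  case (step f1 f2)
  from step(2) obtain h0 where h0: "h0 \<in> H" "h0 \<notin> EC" "f1 = face opp nxt h0" "f2 = face opp nxt (opp h0)"
    unfolding adj_def by blast
  have "((e, False), (h0, False)) \<in> R2" using step(3)[of h0] h0(3) face_self by simp
  moreover have "((h0, False), (opp h0, False)) \<in> R2" using R_opp2[of "(h0, False)"] h0 D2_F opp2_F by simp
  moreover have "((opp h0, False), (g, False)) \<in> R2" using face_conn[OF opp_in[OF h0(1)]] step(4) h0(4) by simp
  ultimately show ?case using conn_trans by metis
qed

lemma adj_nonempty:
  assumes "(face opp nxt e, f) \<in> adj\<^sup>*" and e: "e \<in> H"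
  shows "\<exists>g\<in>H. g \<in> f"
  using assms(1)
proof (induct rule: rtrancl_induct)
  case base then show ?case using e face_self by blast
next
  case (step f1 f2)
  from step(2) obtain h0 where h0: "h0 \<in> H" "f2 = face opp nxt (opp h0)"
    unfolding adj_def by blast
  then show ?case using opp_in face_self by blast
qed

lemma famA_step: "c \<in> Cd \<Longrightarrow> ((c, True), (sc c, True)) \<in> R2"
proof -
  assume c: "c \<in> Cd"
  have cE: "c \<in> EC" using c unfolding EC_def by simp
  have oE: "opp c \<in> EC" using opp_EC[OF cE] .
  have "((c, True), (opp c, False)) \<in> R2" using R_opp2[of "(c, True)"] D2_T cE opp2_T by simp
  moreover have "((opp c, False), (sc c, True)) \<in> R2"
    using R_nxt2[of "(opp c, False)"] D2_F EC_H[OF oE] nxt2_FE[OF oE] partner_Xd[OF opp_Cd[OF c]] Cd_H[OF c] by simp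
  ultimately show ?thesis using conn_trans by metis
qed

lemma famB_step: "c \<in> Cd \<Longrightarrow> ((c, False), (pre c, False)) \<in> R2"
proof -
  assume c: "c \<in> Cd"
  have cE: "c \<in> EC" using c unfolding EC_def by simp
  have xE: "xo c \<in> EC" using xo_Xd[OF c] unfolding EC_def by simp
  have "((c, False), (xo c, True)) \<in> R2"
    using R_nxt2[of "(c, False)"] D2_F Cd_H[OF c] nxt2_FE[OF cE] partner_Cd[OF c] by simp
  moreover have "((xo c, True), (pre c, False)) \<in> R2"
    using R_opp2[of "(xo c, True)"] D2_T xE opp2_T[OF xE] Cd_H[OF pre_in[OF c]] unfolding xo_def by simp
  ultimately show ?thesis using conn_trans by metis
qed

lemma famA: "c \<in> Cd \<Longrightarrow> ((c0, True), (c, True)) \<in> R2"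
proof -
  assume c: "c \<in> Cd"
  have "((c0, True), ((sc ^^ k) c0, True)) \<in> R2" for k
  proof (induct k)
    case (Suc k)
    have "(sc ^^ k) c0 \<in> Cd" using S.funpow_in[OF c0] .
    then show ?case using famA_step Suc conn_trans by fastforce
  qed simp
  moreover obtain k where "c = (sc ^^ k) c0" using single c unfolding orb_def by blast
  ultimately show ?thesis by simp
qed

lemma famB: "c \<in> Cd \<Longrightarrow> ((c0, False), (c, False)) \<in> R2"
proof -
  assume c: "c \<in> Cd"
  have "((c0, False), ((sc ^^ k) c0, False)) \<in> R2" for k
  proof (induct k)
    case (Suc k)
    have ck: "(sc ^^ k) c0 \<in> Cd" using S.funpow_in[OF c0] .
    have "((sc (((sc ^^ k) c0)), False), ((sc ^^ k) c0, False)) \<in> R2"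
      using famB_step[OF sc_in[OF ck]] pre_sc[OF ck] by simp
    then show ?case using Suc conn_trans conn_sym by fastforce
  qed simp
  moreover obtain k where "c = (sc ^^ k) c0" using single c unfolding orb_def by blast
  ultimately show ?thesis by simp
qed

lemma all_fam: "p \<in> D2 \<Longrightarrow> (p, (c0, True)) \<in> R2 \<or> (p, (c0, False)) \<in> R2"
proof -
  have ECfam: "((e, False), (c0, True)) \<in> R2 \<or> ((e, False), (c0, False)) \<in> R2"
    "((e, True), (c0, True)) \<in> R2 \<or> ((e, True), (c0, False)) \<in> R2" if e: "e \<in> EC" for e
  proof -
    have "(((e, False), (c0, True)) \<in> R2 \<or> ((e, False), (c0, False)) \<in> R2) \<and>
          (((e, True), (c0, True)) \<in> R2 \<or> ((e, True), (c0, False)) \<in> R2)"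
    proof (cases "e \<in> Cd")
      case True
      have "((e, False), (c0, False)) \<in> R2" using conn_sym[OF famB[OF True]] .
      moreover have "((e, True), (c0, True)) \<in> R2" using conn_sym[OF famA[OF True]] .
      ultimately show ?thesis by blast
    next
      case False
      then have x: "e \<in> Xd" using e unfolding EC_def by blast
      then obtain c where c: "c \<in> Cd" "e = opp c" unfolding Xd_def by blast
      have cE: "c \<in> EC" using c unfolding EC_def by simp
      have "((c, True), (e, False)) \<in> R2" using R_opp2[of "(c, True)"] D2_T cE opp2_T c by simp
      then have "((e, False), (c0, True)) \<in> R2" using famA[OF c(1)] conn_sym conn_trans by metis
      moreover
      obtain c' where c': "c' \<in> Cd" "e = xo c'" using Xd_xo[OF x] by blast
      have c'E: "c' \<in> EC" using c' unfolding EC_def by simp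
      have "((c', False), (e, True)) \<in> R2"
        using R_nxt2[of "(c', False)"] D2_F Cd_H[OF c'(1)] nxt2_FE[OF c'E] partner_Cd[OF c'(1)] c'(2) by simp
      then have "((e, True), (c0, False)) \<in> R2" using famB[OF c'(1)] conn_sym conn_trans by metis
      ultimately show ?thesis by blast
    qed
    then show "((e, False), (c0, True)) \<in> R2 \<or> ((e, False), (c0, False)) \<in> R2"
      "((e, True), (c0, True)) \<in> R2 \<or> ((e, True), (c0, False)) \<in> R2" by blast+
  qed
  have Hfam: "((h, False), (c0, True)) \<in> R2 \<or> ((h, False), (c0, False)) \<in> R2" if h: "h \<in> H" for h
  proof -
    have "(h, c0) \<in> ({(x, opp x) | x. x \<in> H} \<union> {(x, nxt x) | x. x \<in> H})\<^sup>*"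
      using connected[OF h Cd_H[OF c0]] .
    then show ?thesis using h
    proof (induct rule: converse_rtrancl_induct)
      case base then show ?case by simp
    next
      case (step y z)
      show ?case
      proof (cases "y \<in> EC")
        case True then show ?thesis using ECfam(1) by blast
      next
        case False
        from step(1) have yz: "y \<in> H \<and> (z = opp y \<or> z = nxt y)" by blast
        then have zH: "z \<in> H" using opp_in nxt_in by blast
        have "((y, False), (z, False)) \<in> R2"
        proof (cases "z = opp y")
          case True then show ?thesis using R_opp2[of "(y, False)"] D2_F yz opp2_F False by simp
        next
          case F2: False
          then have "z = nxt y" using yz by blast
          then show ?thesis using R_nxt2[of "(y, False)"] D2_F yz nxt2_F False by simp
        qed
        then show ?thesis using step(3)[OF zH] conn_trans by metis
      qed
    qed
  qed
  assume p: "p \<in> D2"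
  then show ?thesis
  proof (rule D2_cases)
    fix h assume "p = (h, False)" "h \<in> H" then show ?thesis using Hfam by blast
  next
    fix e assume "p = (e, True)" "e \<in> EC" then show ?thesis using ECfam(2) by blast
  qed
qed

theorem jordan: "Fx \<inter> Fc = {}"
proof (rule ccontr)
  assume "Fx \<inter> Fc \<noteq> {}"
  then obtain f where f: "f \<in> Fx" "f \<in> Fc" by blast
  then obtain x c where x: "x \<in> Xd" "(face opp nxt x, f) \<in> adj\<^sup>*"
    and c: "c \<in> Cd" "(face opp nxt c, f) \<in> adj\<^sup>*" unfolding Fx_def Fc_def by blast
  obtain g where g: "g \<in> H" "g \<in> f" using adj_nonempty[OF c(2) Cd_H[OF c(1)]] by blast
  have "((x, False), (g, False)) \<in> R2" using adj_conn[OF x(2) Xd_H[OF x(1)] g(2)] .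
  moreover have "((c, False), (g, False)) \<in> R2" using adj_conn[OF c(2) Cd_H[OF c(1)] g(2)] .
  ultimately have xc: "((x, False), (c, False)) \<in> R2" using conn_sym conn_trans by metis
  obtain c1 where c1: "c1 \<in> Cd" "x = opp c1" using x(1) unfolding Xd_def by blast
  have c1E: "c1 \<in> EC" using c1 unfolding EC_def by simp
  have "((c1, True), (x, False)) \<in> R2" using R_opp2[of "(c1, True)"] D2_T c1E opp2_T c1 by simp
  then have "((c0, True), (x, False)) \<in> R2" using famA[OF c1(1)] conn_trans by metis
  then have AB: "((c0, True), (c0, False)) \<in> R2" using xc famB[OF c(1)] conn_sym conn_trans by metis
  have all: "(p, (c0, False)) \<in> R2" if "p \<in> D2" for p
    using all_fam[OF that] AB conn_trans by metis
  have c0D: "(c0, False) \<in> D2" using D2_F Cd_H[OF c0] by simp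
  have "D2 // R2 = {R2 `` {(c0, False)}}"
  proof -
    have "R2 `` {p} = R2 `` {(c0, False)}" if "p \<in> D2" for p
    proof -
      have a: "(p, (c0, False)) \<in> R2" using all[OF that] .
      show ?thesis
      proof (intro equalityI subsetI)
        fix y assume "y \<in> R2 `` {p}"
        then have "(p, y) \<in> R2" by simp
        then have "((c0, False), y) \<in> R2" using conn_trans[OF conn_sym[OF a]] by simp
        then show "y \<in> R2 `` {(c0, False)}" by simp
      next
        fix y assume "y \<in> R2 `` {(c0, False)}"
        then have "((c0, False), y) \<in> R2" by simp
        then have "(p, y) \<in> R2" using conn_trans[OF a] by simp
        then show "y \<in> R2 `` {p}" by simp
      qed
    qed
    then show ?thesis unfolding quot_img using c0D by blast
  qed
  then have q1: "card (D2 // R2) = 1" by simp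
  have G: "cyc nxt2 D2 + cyc opp2 D2 + cyc (nxt2 \<circ> opp2) D2 \<le> card D2 + 2 * card (D2 // R2)"
    by (rule genus[OF finD2 bij_nxt2 bij_opp2])
  have "cyc (nxt2 \<circ> opp2) D2 = cyc phi2 D2" unfolding phi2_def ..
  moreover have "2 * cyc opp2 D2 = card D2" by (rule cyc_opp2)
  moreover have "card D2 = card H + 2 * card Cd" using card_D2 card_EC by simp
  moreover have "card H = 2 * card (edges H opp)" using two_E by simp
  ultimately have "card (vertices H nxt) + card (faces H opp nxt) \<le> card (edges H opp)"
    using G q1 cyc_nxt2 cyc_phi2 by linarith
  then show False using euler by linarith
qed

end

context jc begin

lemma adj_I: "h \<in> H \<Longrightarrow> h \<notin> EC \<Longrightarrow> (face opp nxt h, face opp nxt (opp h)) \<in> adj"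
  unfolding adj_def by blast

lemma adj_sym: "(f, g) \<in> adj \<Longrightarrow> (g, f) \<in> adj"
proof -
  assume "(f, g) \<in> adj"
  then obtain h where h: "h \<in> H" "h \<notin> EC" "f = face opp nxt h" "g = face opp nxt (opp h)"
    unfolding adj_def by blast
  have "opp h \<in> H" "opp h \<notin> EC" using opp_in[OF h(1)] opp_EC_iff[OF h(1)] h(2) by auto
  then have "(face opp nxt (opp h), face opp nxt (opp (opp h))) \<in> adj" by (rule adj_I)
  then show ?thesis using h by simp
qed

lemma adj_rtr_sym: "(f, g) \<in> adj\<^sup>* \<Longrightarrow> (g, f) \<in> adj\<^sup>*"
proof -
  have "sym adj" unfolding sym_def using adj_sym by blast
  then have "sym (adj\<^sup>*)" by (rule sym_rtrancl)
  then show "(f, g) \<in> adj\<^sup>* \<Longrightarrow> (g, f) \<in> adj\<^sup>*" unfolding sym_def by blast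
qed

lemma adj_nxt: "h \<in> H \<Longrightarrow> h \<notin> EC \<Longrightarrow> (face opp nxt h, face opp nxt (nxt h)) \<in> adj"
  using adj_I face_nxt by simp

lemma Fx_cl: "f \<in> Fx \<Longrightarrow> (f, g) \<in> adj\<^sup>* \<Longrightarrow> g \<in> Fx"
proof -
  assume "f \<in> Fx" "(f, g) \<in> adj\<^sup>*"
  then obtain x where "x \<in> Xd" "(face opp nxt x, f) \<in> adj\<^sup>*" unfolding Fx_def by blast
  then show "g \<in> Fx" unfolding Fx_def using rtrancl_trans[OF _ \<open>(f, g) \<in> adj\<^sup>*\<close>] by blast
qed
lemma Fc_cl: "f \<in> Fc \<Longrightarrow> (f, g) \<in> adj\<^sup>* \<Longrightarrow> g \<in> Fc"
proof -
  assume "f \<in> Fc" "(f, g) \<in> adj\<^sup>*"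
  then obtain x where "x \<in> Cd" "(face opp nxt x, f) \<in> adj\<^sup>*" unfolding Fc_def by blast
  then show "g \<in> Fc" unfolding Fc_def using rtrancl_trans[OF _ \<open>(f, g) \<in> adj\<^sup>*\<close>] by blast
qed
lemma Fx_cl': "f \<in> Fx \<Longrightarrow> (g, f) \<in> adj\<^sup>* \<Longrightarrow> g \<in> Fx"
  using Fx_cl adj_rtr_sym by metis
lemma Fc_cl': "f \<in> Fc \<Longrightarrow> (g, f) \<in> adj\<^sup>* \<Longrightarrow> g \<in> Fc"
  using Fc_cl adj_rtr_sym by metis

lemma Fx_seed: "x \<in> Xd \<Longrightarrow> face opp nxt x \<in> Fx" unfolding Fx_def by blast
lemma Fc_seed: "c \<in> Cd \<Longrightarrow> face opp nxt c \<in> Fc" unfolding Fc_def by blast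

lemma complete: "h \<in> H \<Longrightarrow> face opp nxt h \<in> Fx \<union> Fc"
proof -
  assume h: "h \<in> H"
  have "(h, c0) \<in> ({(x, opp x) | x. x \<in> H} \<union> {(x, nxt x) | x. x \<in> H})\<^sup>*"
    using connected[OF h Cd_H[OF c0]] .
  then show ?thesis
  proof (induct rule: converse_rtrancl_induct)
    case base then show ?case using Fc_seed[OF c0] by simp
  next
    case (step y z)
    from step(1) have yz: "y \<in> H" "z = opp y \<or> z = nxt y" by blast+
    show ?case
    proof (cases "y \<in> EC")
      case True then show ?thesis using Fx_seed Fc_seed unfolding EC_def by blast
    next
      case False
      have "(face opp nxt y, face opp nxt z) \<in> adj" using yz adj_I[OF yz(1) False] adj_nxt[OF yz(1) False] by blast
      then have "(face opp nxt y, face opp nxt z) \<in> adj\<^sup>*" by blast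
      then show ?thesis using step(3) Fx_cl' Fc_cl' by blast
    qed
  qed
qed

lemma rot_chain:
  assumes h: "h \<in> H" and ne: "\<And>t. a \<le> t \<Longrightarrow> t < b \<Longrightarrow> (nxt ^^ t) h \<notin> EC"
  shows "a \<le> m \<Longrightarrow> m \<le> b \<Longrightarrow> (face opp nxt ((nxt ^^ a) h), face opp nxt ((nxt ^^ m) h)) \<in> adj\<^sup>*"
proof (induct m)
  case 0 then show ?case by simp
next
  case (Suc m)
  show ?case
  proof (cases "a = Suc m")
    case True then show ?thesis by simp
  next
    case False
    then have am: "a \<le> m" "m < b" using Suc by auto
    have g: "(nxt ^^ m) h \<in> H" using pow_H[OF h] .
    have "(face opp nxt ((nxt ^^ m) h), face opp nxt (nxt ((nxt ^^ m) h))) \<in> adj"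
      using adj_nxt[OF g ne[OF am]] .
    then show ?thesis using Suc(1)[OF am(1)] am by simp
  qed
qed

lemma rotA: assumes c: "c \<in> Cd" and m: "0 < m" "m \<le> px c"
  shows "face opp nxt ((nxt ^^ m) c) \<in> Fx"
proof -
  have ne: "(nxt ^^ t) c \<notin> EC" if "1 \<le> t" "t < px c" for t
    using not_EC_pos[OF c] that px_props[OF c] by simp
  have "(face opp nxt ((nxt ^^ 1) c), face opp nxt ((nxt ^^ m) c)) \<in> adj\<^sup>*"
    using rot_chain[where a=1 and b="px c", OF Cd_H[OF c] ne] m by simp
  moreover have "face opp nxt ((nxt ^^ 1) c) \<in> Fx"
    using Fx_seed[OF opp_Cd[OF c]] face_nxt[OF Cd_H[OF c]] by simp
  ultimately show ?thesis using Fx_cl by blast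
qed

lemma rotB: assumes c: "c \<in> Cd" and m: "px c < m" "m \<le> deg c"
  shows "face opp nxt ((nxt ^^ m) c) \<in> Fc"
proof -
  have ne: "(nxt ^^ t) c \<notin> EC" if "Suc (px c) \<le> t" "t < deg c" for t
    using not_EC_pos[OF c] that px_props[OF c] by simp
  have "(face opp nxt ((nxt ^^ Suc (px c)) c), face opp nxt ((nxt ^^ m) c)) \<in> adj\<^sup>*"
    using rot_chain[where a="Suc (px c)" and b="deg c", OF Cd_H[OF c] ne] m by simp
  moreover have "face opp nxt ((nxt ^^ Suc (px c)) c) \<in> Fc"
  proof -
    have "(nxt ^^ Suc (px c)) c = nxt (xo c)" using px_props(3)[OF c] by simp
    moreover have "face opp nxt (nxt (xo c)) = face opp nxt (pre c)"
      using face_nxt[OF Xd_H[OF xo_Xd[OF c]]] Cd_H[OF pre_in[OF c]] unfolding xo_def by simp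
    ultimately show ?thesis using Fc_seed[OF pre_in[OF c]] by simp
  qed
  ultimately show ?thesis using Fc_cl by blast
qed

lemma seedsX: "c \<in> Cd \<Longrightarrow> (face opp nxt (xo c0), face opp nxt (xo c)) \<in> adj\<^sup>*"
proof -
  have step: "(face opp nxt (xo (sc c)), face opp nxt (xo c)) \<in> adj\<^sup>*" if c: "c \<in> Cd" for c
  proof -
    have ne: "(nxt ^^ t) c \<notin> EC" if "1 \<le> t" "t < px c" for t
      using not_EC_pos[OF c] that px_props[OF c] by simp
    have "(face opp nxt ((nxt ^^ 1) c), face opp nxt ((nxt ^^ px c) c)) \<in> adj\<^sup>*"
      using rot_chain[where a=1 and b="px c" and m="px c", OF Cd_H[OF c] ne] px_props(1)[OF c] by simp
    moreover have "face opp nxt ((nxt ^^ 1) c) = face opp nxt (xo (sc c))"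
      using face_nxt[OF Cd_H[OF c]] xo_sc[OF c] by simp
    ultimately show ?thesis using px_props(3)[OF c] by simp
  qed
  have "(face opp nxt (xo c0), face opp nxt (xo ((sc ^^ k) c0))) \<in> adj\<^sup>*" for k
  proof (induct k)
    case (Suc k)
    have ck: "(sc ^^ k) c0 \<in> Cd" using S.funpow_in[OF c0] .
    have "(face opp nxt (xo ((sc ^^ k) c0)), face opp nxt (xo (sc ((sc ^^ k) c0)))) \<in> adj\<^sup>*"
      using adj_rtr_sym[OF step[OF ck]] .
    then show ?case using rtrancl_trans[OF Suc] by simp
  qed simp
  moreover assume "c \<in> Cd"
  then obtain k where "c = (sc ^^ k) c0" using single unfolding orb_def by blast
  ultimately show ?thesis by simp
qed

lemma seedsC: "c \<in> Cd \<Longrightarrow> (face opp nxt c0, face opp nxt c) \<in> adj\<^sup>*"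
proof -
  have step: "(face opp nxt (pre c), face opp nxt c) \<in> adj\<^sup>*" if c: "c \<in> Cd" for c
  proof -
    have ne: "(nxt ^^ t) c \<notin> EC" if "Suc (px c) \<le> t" "t < deg c" for t
      using not_EC_pos[OF c] that px_props[OF c] by simp
    have "(face opp nxt ((nxt ^^ Suc (px c)) c), face opp nxt ((nxt ^^ deg c) c)) \<in> adj\<^sup>*"
      using rot_chain[where a="Suc (px c)" and b="deg c" and m="deg c", OF Cd_H[OF c] ne] px_props(2)[OF c] by simp
    moreover have "(nxt ^^ Suc (px c)) c = nxt (xo c)" using px_props(3)[OF c] by simp
    moreover have "face opp nxt (nxt (xo c)) = face opp nxt (pre c)"
      using face_nxt[OF Xd_H[OF xo_Xd[OF c]]] Cd_H[OF pre_in[OF c]] unfolding xo_def by simp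
    ultimately show ?thesis using nxt_deg[OF Cd_H[OF c]] by simp
  qed
  have "(face opp nxt c0, face opp nxt ((sc ^^ k) c0)) \<in> adj\<^sup>*" for k
  proof (induct k)
    case (Suc k)
    have ck: "(sc ^^ k) c0 \<in> Cd" using S.funpow_in[OF c0] .
    have "(face opp nxt ((sc ^^ k) c0), face opp nxt (sc ((sc ^^ k) c0))) \<in> adj\<^sup>*"
      using step[OF sc_in[OF ck]] pre_sc[OF ck] by simp
    then show ?case using rtrancl_trans[OF Suc] by simp
  qed simp
  moreover assume "c \<in> Cd"
  then obtain k where "c = (sc ^^ k) c0" using single unfolding orb_def by blast
  ultimately show ?thesis by simp
qed

lemma Fc_class: "f \<in> Fc \<longleftrightarrow> (face opp nxt c0, f) \<in> adj\<^sup>*"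
proof
  assume "f \<in> Fc"
  then obtain c where c: "c \<in> Cd" "(face opp nxt c, f) \<in> adj\<^sup>*" unfolding Fc_def by blast
  show "(face opp nxt c0, f) \<in> adj\<^sup>*" using rtrancl_trans[OF seedsC[OF c(1)] c(2)] .
next
  assume "(face opp nxt c0, f) \<in> adj\<^sup>*"
  then show "f \<in> Fc" unfolding Fc_def using c0 by blast
qed

lemma Fx_class: "f \<in> Fx \<longleftrightarrow> (face opp nxt (xo c0), f) \<in> adj\<^sup>*"
proof
  assume "f \<in> Fx"
  then obtain x where x: "x \<in> Xd" "(face opp nxt x, f) \<in> adj\<^sup>*" unfolding Fx_def by blast
  obtain c where c: "c \<in> Cd" "x = xo c" using Xd_xo[OF x(1)] by blast
  show "(face opp nxt (xo c0), f) \<in> adj\<^sup>*" using rtrancl_trans[OF seedsX[OF c(1)]] x(2) c(2) by simp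
next
  assume "(face opp nxt (xo c0), f) \<in> adj\<^sup>*"
  then show "f \<in> Fx" unfolding Fx_def using xo_Xd[OF c0] by blast
qed

lemma noncyc_vertex:
  assumes h: "h \<in> H" and nc: "tail nxt h \<notin> tail nxt ` Cd"
  shows "\<And>g. g \<in> tail nxt h \<Longrightarrow> g \<notin> EC \<and> (face opp nxt h, face opp nxt g) \<in> adj\<^sup>*"
proof -
  have ne: "(nxt ^^ t) h \<notin> EC" for t
  proof
    assume e: "(nxt ^^ t) h \<in> EC"
    obtain c where c: "c \<in> Cd" "tail nxt ((nxt ^^ t) h) = tail nxt c" using EC_tail[OF e] by blast
    have "tail nxt ((nxt ^^ t) h) = tail nxt h" using tail_eqI[OF h pow_in_tail] .
    then show False using nc c by (metis image_eqI)
  qed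
  fix g assume g: "g \<in> tail nxt h"
  obtain k where k: "k < deg h" "(nxt ^^ k) h = g" using tail_pow[OF h g] by blast
  have "(face opp nxt ((nxt ^^ 0) h), face opp nxt ((nxt ^^ k) h)) \<in> adj\<^sup>*"
    using rot_chain[OF h, of 0 k k] ne by simp
  then show "g \<notin> EC \<and> (face opp nxt h, face opp nxt g) \<in> adj\<^sup>*" using k ne by auto
qed

lemma adj_faces: "(f, g) \<in> adj\<^sup>* \<Longrightarrow> f \<in> faces H opp nxt \<Longrightarrow> g \<in> faces H opp nxt"
proof (induct rule: rtrancl_induct)
  case (step y z) then show ?case unfolding adj_def faces_def using opp_in by blast
qed simp

end

lemma all_mod_up:
  fixes d t j :: nat and Q :: "nat \<Rightarrow> bool"
  assumes d: "0 < d" and step: "\<And>s. s < d \<Longrightarrow> Q s \<Longrightarrow> Q (Suc s mod d)" and t: "t < d" "Q t"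
  shows "j < d \<Longrightarrow> Q j"
proof -
  have up: "Q a \<Longrightarrow> a < d \<Longrightarrow> a + n < d \<Longrightarrow> Q (a + n)" for a n :: nat
  proof (induct n)
    case (Suc n)
    then have "Q (Suc (a + n) mod d)" using step[of "a + n"] by simp
    then show ?case using Suc by simp
  qed simp
  have "Q (d - 1)" using up[OF t(2) t(1), of "d - 1 - t"] t d by simp
  then have "Q (Suc (d - 1) mod d)" using step[of "d - 1"] d by simp
  then have q0: "Q 0" using d by simp
  assume "j < d" then show "Q j" using up[OF q0 d, of j] by simp
qed

lemma all_mod_down:
  fixes d t j :: nat and Q :: "nat \<Rightarrow> bool"
  assumes d: "0 < d" and step: "\<And>s. s < d \<Longrightarrow> Q s \<Longrightarrow> Q ((s + d - 1) mod d)" and t: "t < d" "Q t"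
  shows "j < d \<Longrightarrow> Q j"
proof -
  have dn: "Q a \<Longrightarrow> a < d \<Longrightarrow> n \<le> a \<Longrightarrow> Q (a - n)" for a n :: nat
  proof (induct n)
    case (Suc n)
    then have q: "Q (a - n)" by simp
    have "a - n < d" "0 < a - n" using Suc by auto
    then have "(a - n + d - 1) mod d = a - Suc n" by (simp add: mod_if)
    then show ?case using step[of "a - n"] q \<open>a - n < d\<close> by simp
  qed simp
  have q0: "Q 0" using dn[OF t(2) t(1), of t] by simp
  then have "Q ((0 + d - 1) mod d)" using step[of 0] d by simp
  then have qd: "Q (d - 1)" using d by simp
  assume "j < d" then show "Q j" using dn[OF qd, of "d - 1 - j"] d by simp
qed

lemma funpow_add_app: "(f ^^ (m + n)) x = (f ^^ n) ((f ^^ m) x)"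
  by (induct n) auto

lemma sum_rot:
  fixes t d :: nat
  assumes t: "t < d"
  shows "(\<Sum>s<d. g ((t + s) mod d)) = (\<Sum>j<d. (g j :: nat))"
proof -
  have im: "(\<lambda>s. (t + s) mod d) ` {..<d} = {..<d}"
  proof
    have "0 < d" using t by simp
    then show "(\<lambda>s. (t + s) mod d) ` {..<d} \<subseteq> {..<d}" by auto
    show "{..<d} \<subseteq> (\<lambda>s. (t + s) mod d) ` {..<d}"
    proof
      fix j assume j: "j \<in> {..<d}"
      have "(t + (j + d - t) mod d) mod d = (t + (j + d - t)) mod d" by (simp add: mod_add_right_eq)
      also have "t + (j + d - t) = j + d" using t by simp
      also have "(j + d) mod d = j" using j by simp
      finally show "j \<in> (\<lambda>s. (t + s) mod d) ` {..<d}" using t by (intro image_eqI[of _ _ "(j + d - t) mod d"]) auto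
    qed
  qed
  then have "card ((\<lambda>s. (t + s) mod d) ` {..<d}) = card {..<d}" by simp
  then have "inj_on (\<lambda>s. (t + s) mod d) {..<d}" using inj_on_iff_eq_card[of "{..<d}"] by blast
  then have "bij_betw (\<lambda>s. (t + s) mod d) {..<d} {..<d}" using im unfolding bij_betw_def by blast
  then show ?thesis by (rule sum.reindex_bij_betw)
qed

locale wood =
  fixes d :: nat and H :: "'a set" and opp nxt :: "'a \<Rightarrow> 'a" and ou :: "nat \<Rightarrow> 'a" and W :: "nat \<Rightarrow> 'a set"
  assumes dmap: "d_map d H opp nxt ou" and w0: "W0 d H opp nxt ou W"
    and w1: "W1 d H opp nxt ou W" and w2: "W2 d H opp nxt ou W"
begin

sublocale pmap H opp nxt using dmap unfolding d_map_def by unfold_locales blast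

lemma d3: "3 \<le> d" using dmap unfolding d_map_def by blast
lemma ou_H: "k < d \<Longrightarrow> ou k \<in> H" using dmap unfolding d_map_def by blast
lemma ou_phi: "k < d \<Longrightarrow> phi opp nxt (ou k) = ou (Suc k mod d)" using dmap unfolding d_map_def by blast
lemma vt_inj: "inj_on (\<lambda>k. tail nxt (ou k)) {..<d}" using dmap unfolding d_map_def by blast

abbreviation vt :: "nat \<Rightarrow> 'a set" where "vt k \<equiv> tail nxt (ou k)"

lemma vt_ov: "outer_vertex nxt ou k = vt k" unfolding outer_vertex_def ..

lemma W_sub: "i < d \<Longrightarrow> W i \<subseteq> H" using w0 unfolding W0_def by blast
lemma W_card: "i < d \<Longrightarrow> u \<in> vertices H nxt \<Longrightarrow> u \<noteq> vt i \<Longrightarrow> card {h \<in> W i. tail nxt h = u} = 1"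
  using w0 unfolding W0_def vt_ov by blast
lemma W_root: "i < d \<Longrightarrow> {h \<in> W i. tail nxt h = vt i} = {}"
  using w0 unfolding W0_def vt_ov by blast
lemma W_ou: "i < d \<Longrightarrow> k < d \<Longrightarrow> k \<noteq> i \<Longrightarrow> ou k \<in> W i"
  using w0 unfolding W0_def by blast

definition out :: "nat \<Rightarrow> 'a set \<Rightarrow> 'a" where "out i u = outarc nxt W i u"

lemma out_props:
  assumes i: "i < d" and u: "u \<in> vertices H nxt" "u \<noteq> vt i"
  shows "out i u \<in> W i" "tail nxt (out i u) = u" "\<And>h. h \<in> W i \<Longrightarrow> tail nxt h = u \<Longrightarrow> h = out i u"
proof -
  obtain a where a: "{h \<in> W i. tail nxt h = u} = {a}" using W_card[OF i u] card_1_singletonE by blast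
  have "out i u = a" unfolding out_def outarc_def using a by (intro the_equality) blast+
  then show "out i u \<in> W i" "tail nxt (out i u) = u" "\<And>h. h \<in> W i \<Longrightarrow> tail nxt h = u \<Longrightarrow> h = out i u"
    using a by blast+
qed

lemma out_H: "i < d \<Longrightarrow> u \<in> vertices H nxt \<Longrightarrow> u \<noteq> vt i \<Longrightarrow> out i u \<in> H"
  using out_props(1) W_sub by blast

definition succ :: "nat \<Rightarrow> 'a set \<Rightarrow> 'a set" where "succ i u = tail nxt (opp (out i u))"

lemma vert_tail: "h \<in> H \<Longrightarrow> tail nxt h \<in> vertices H nxt" unfolding vertices_def by blast

lemma succ_vert: "i < d \<Longrightarrow> u \<in> vertices H nxt \<Longrightarrow> u \<noteq> vt i \<Longrightarrow> succ i u \<in> vertices H nxt"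
  unfolding succ_def using vert_tail opp_in out_H by blast

lemma ou_next: "k < d \<Longrightarrow> tail nxt (opp (ou k)) = vt (Suc k mod d)"
proof -
  assume k: "k < d"
  have "ou (Suc k mod d) = nxt (opp (ou k))" using ou_phi[OF k] phi_app by simp
  then have "ou (Suc k mod d) \<in> tail nxt (opp (ou k))" unfolding tail_orb by simp
  from tail_eqI[OF opp_in[OF ou_H[OF k]] this] show ?thesis by simp
qed

lemma vt_vert: "k < d \<Longrightarrow> vt k \<in> vertices H nxt" using vert_tail ou_H by blast

lemma vt_ne: "k < d \<Longrightarrow> i < d \<Longrightarrow> k \<noteq> i \<Longrightarrow> vt k \<noteq> vt i"
  using vt_inj unfolding inj_on_def by blast

lemma out_vt: "i < d \<Longrightarrow> k < d \<Longrightarrow> k \<noteq> i \<Longrightarrow> out i (vt k) = ou k"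
  using out_props(3)[of i "vt k" "ou k"] W_ou vt_vert vt_ne by simp

lemma succ_vt: "i < d \<Longrightarrow> k < d \<Longrightarrow> k \<noteq> i \<Longrightarrow> succ i (vt k) = vt (Suc k mod d)"
  unfolding succ_def using out_vt ou_next by simp

lemma face_ou: "k < d \<Longrightarrow> face opp nxt (ou k) = face opp nxt (ou 0)"
proof (induct k)
  case (Suc k)
  then have k: "k < d" by simp
  have "ou (Suc k) = phi opp nxt (ou k)" using ou_phi[OF k] Suc by simp
  then have "ou (Suc k) \<in> face opp nxt (ou k)" unfolding face_orb by simp
  from face_eqI[OF ou_H[OF k] this] show ?case using Suc k by simp
qed simp

definition inner :: "'a set \<Rightarrow> bool" where
  "inner u \<longleftrightarrow> u \<in> vertices H nxt \<and> (\<forall>k<d. u \<noteq> vt k)"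

lemma inner_W1:
  assumes "inner u"
  shows "(\<exists>j<d. out j u \<noteq> out 0 u) \<and> (\<Sum>j<d. cw_dist nxt (out j u) (out (Suc j mod d) u)) = card u"
proof -
  have "u \<notin> outer_vertices d nxt ou" using assms unfolding inner_def outer_vertices_def by blast
  then show ?thesis using w1 assms unfolding W1_def inner_def out_def by blast
qed

lemma inner_W2:
  assumes "inner u" "i < d" "h \<in> W i" "tail nxt (opp h) = u"
  shows "(let a = (\<lambda>j. out j u); p = Suc i mod d; q = (i + d - 1) mod d;
               D = (\<Sum>t<d-2. cw_dist nxt (a ((i + 1 + t) mod d)) (a ((i + 2 + t) mod d)));
               x = opp h
           in 0 < cw_dist nxt (a p) x \<and> cw_dist nxt (a p) x < D)"
proof -
  have "u \<notin> outer_vertices d nxt ou" using assms unfolding inner_def outer_vertices_def by blast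
  then show ?thesis using w2 assms unfolding W2_def inner_def out_def head_def Let_def by blast
qed

lemma warith:
  assumes t: "t < d" and u: "inner u" and h: "h \<in> W t" and hu: "tail nxt (opp h) = u"
  shows "0 < cw_dist nxt (out t u) (opp h)"
    and "\<exists>m < cw_dist nxt (out t u) (opp h). out (Suc t mod d) u = (nxt ^^ m) (out t u)"
    and "out ((t + d - 1) mod d) u = out t u \<or>
         (\<exists>m. cw_dist nxt (out t u) (opp h) < m \<and> m < deg (out t u) \<and>
              out ((t + d - 1) mod d) u = (nxt ^^ m) (out t u))"
proof -
  define a where "a j = out j u" for j
  define c where "c = a t"
  define x where "x = opp h"
  have uv: "u \<in> vertices H nxt" and unv: "\<And>k. k < d \<Longrightarrow> u \<noteq> vt k" using u unfolding inner_def by auto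
  have aH: "a j \<in> H" if "j < d" for j unfolding a_def using out_H[OF that uv unv[OF that]] .
  have at: "tail nxt (a j) = u" if "j < d" for j unfolding a_def using out_props(2)[OF that uv unv[OF that]] .
  have cH: "c \<in> H" unfolding c_def using aH[OF t] .
  have ct: "tail nxt c = u" unfolding c_def using at[OF t] .
  have a_in: "a j \<in> tail nxt c" if "j < d" for j using tail_mem[of "a j" c] at[OF that] ct by simp
  have xH: "x \<in> H" unfolding x_def using opp_in W_sub[OF t] h by blast
  have x_in: "x \<in> tail nxt c" using tail_mem[of x c] hu ct unfolding x_def by simp
  define N where "N = deg c"
  have Nu: "N = card u" unfolding N_def deg_def using ct by simp
  have same: "z \<in> tail nxt y" if "y \<in> tail nxt c" "z \<in> tail nxt c" for y z
    using tail_eqI[OF cH that(1)] tail_eqI[OF cH that(2)] tail_mem by metis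
  have yH: "y \<in> tail nxt c \<Longrightarrow> y \<in> H" for y using tail_sub[OF cH] by blast
  have degy: "y \<in> tail nxt c \<Longrightarrow> deg y = N" for y unfolding N_def using deg_eq[OF cH] by simp
  define g where "g j = cw_dist nxt (a j) (a (Suc j mod d))" for j
  define p where "p = Suc t mod d"
  define q where "q = (t + d - 1) mod d"
  define D where "D = (\<Sum>s<d-2. cw_dist nxt (a ((t + 1 + s) mod d)) (a ((t + 2 + s) mod d)))"
  have W1: "(\<Sum>j<d. g j) = N" using inner_W1[OF u] Nu unfolding g_def a_def by simp
  have W2: "0 < cw_dist nxt (a p) x \<and> cw_dist nxt (a p) x < D"
    using inner_W2[OF u t h hu] unfolding a_def p_def D_def x_def Let_def by simp
  have d3': "d = Suc (Suc (d - 2))" using d3 by simp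
  have "(\<Sum>s<d. g ((t + s) mod d)) = N" using sum_rot[OF t, of g] W1 by simp
  moreover have "(\<Sum>s<d. g ((t + s) mod d)) = g ((t + 0) mod d) + (\<Sum>s<d-2. g ((t + Suc s) mod d)) + g ((t + Suc (d - 2)) mod d)"
  proof -
    have "(\<Sum>s<d. g ((t + s) mod d)) = (\<Sum>s<Suc (Suc (d - 2)). g ((t + s) mod d))" using d3' by simp
    also have "\<dots> = g ((t + 0) mod d) + (\<Sum>s<Suc (d - 2). g ((t + Suc s) mod d))"
      by (rule sum.lessThan_Suc_shift)
    also have "\<dots> = g ((t + 0) mod d) + (\<Sum>s<d-2. g ((t + Suc s) mod d)) + g ((t + Suc (d - 2)) mod d)"
      by simp
    finally show ?thesis .
  qed
  moreover have "g ((t + 0) mod d) = cw_dist nxt c (a p)" unfolding g_def c_def p_def using t by simp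
  moreover have "(\<Sum>s<d-2. g ((t + Suc s) mod d)) = D"
    unfolding D_def g_def by (intro sum.cong) (simp_all add: mod_Suc_eq add.commute add.left_commute)
  moreover have "g ((t + Suc (d - 2)) mod d) = cw_dist nxt (a q) c"
  proof -
    have "t + Suc (d - 2) = t + d - 1" using d3 by simp
    then have e1: "(t + Suc (d - 2)) mod d = q" unfolding q_def by (simp only:)
    have e2: "Suc q mod d = t" unfolding q_def
    proof -
      have "Suc ((t + d - 1) mod d) mod d = Suc (t + d - 1) mod d" by (rule mod_Suc_eq)
      also have "Suc (t + d - 1) = t + d" using d3 by simp
      finally show "Suc ((t + d - 1) mod d) mod d = t" using t by simp
    qed
    show ?thesis unfolding e1 g_def e2 c_def ..
  qed
  ultimately have sumeq: "cw_dist nxt c (a p) + D + cw_dist nxt (a q) c = N" by simp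
  define \<alpha> where "\<alpha> = cw_dist nxt c (a p)"
  define \<beta> where "\<beta> = cw_dist nxt (a q) c"
  define \<delta> where "\<delta> = cw_dist nxt (a p) x"
  have p_lt: "p < d" unfolding p_def using t by simp
  have q_lt: "q < d" unfolding q_def using t d3 by simp
  have ap: "(nxt ^^ \<alpha>) c = a p" unfolding \<alpha>_def using cw_props(2)[OF cH a_in[OF p_lt]] .
  have apx: "(nxt ^^ \<delta>) (a p) = x" unfolding \<delta>_def using cw_props(2)[OF aH[OF p_lt] same[OF a_in[OF p_lt] x_in]] .
  have chain: "n \<le> d - 2 \<Longrightarrow> (nxt ^^ (\<Sum>s<n. cw_dist nxt (a ((t + 1 + s) mod d)) (a ((t + 2 + s) mod d)))) (a p) = a ((t + 1 + n) mod d)" for n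
  proof (induct n)
    case 0 then show ?case unfolding p_def by simp
  next
    case (Suc n)
    then have IH: "(nxt ^^ (\<Sum>s<n. cw_dist nxt (a ((t + 1 + s) mod d)) (a ((t + 2 + s) mod d)))) (a p) = a ((t + 1 + n) mod d)" by simp
    have l1: "(t + 1 + n) mod d < d" "(t + 2 + n) mod d < d" using d3 by auto
    have "(nxt ^^ cw_dist nxt (a ((t + 1 + n) mod d)) (a ((t + 2 + n) mod d))) (a ((t + 1 + n) mod d)) = a ((t + 2 + n) mod d)"
      using cw_props(2)[OF aH[OF l1(1)] same[OF a_in[OF l1(1)] a_in[OF l1(2)]]] .
    then show ?case using IH funpow_add_app[where f=nxt and m="\<Sum>s<n. cw_dist nxt (a ((t + 1 + s) mod d)) (a ((t + 2 + s) mod d))"] by simp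
  qed
  have aq: "(nxt ^^ D) (a p) = a q"
  proof -
    have "t + 1 + (d - 2) = t + d - 1" using d3 by simp
    then have "(t + 1 + (d - 2)) mod d = q" unfolding q_def by (simp only:)
    then show ?thesis using chain[of "d - 2"] unfolding D_def by simp
  qed
  have Npos: "0 < N" unfolding N_def using deg_pos[OF cH] .
  have lt: "\<alpha> + \<delta> < N" using sumeq W2 unfolding \<alpha>_def \<delta>_def \<beta>_def by simp
  have "(nxt ^^ (\<alpha> + \<delta>)) c = x" using ap apx funpow_add_app[where f=nxt and m=\<alpha> and n=\<delta> and x=c] by simp
  then have cwx: "cw_dist nxt c x = \<alpha> + \<delta>" using cw_iff[OF cH x_in] lt unfolding N_def by simp
  have cout: "out t u = c" unfolding c_def a_def ..
  show "0 < cw_dist nxt (out t u) (opp h)" using cwx W2 cout unfolding x_def \<delta>_def by simp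
  show "\<exists>m < cw_dist nxt (out t u) (opp h). out (Suc t mod d) u = (nxt ^^ m) (out t u)"
    using cwx W2 cout ap unfolding x_def \<delta>_def a_def p_def by (intro exI[of _ \<alpha>]) simp
  have aqm: "(nxt ^^ (\<alpha> + D)) c = a q" using ap aq funpow_add_app[where f=nxt and m=\<alpha> and n=D and x=c] by simp
  show "out ((t + d - 1) mod d) u = out t u \<or>
         (\<exists>m. cw_dist nxt (out t u) (opp h) < m \<and> m < deg (out t u) \<and>
              out ((t + d - 1) mod d) u = (nxt ^^ m) (out t u))"
  proof (cases "\<beta> = 0")
    case True
    have cc: "c \<in> tail nxt c" using tail_mem[of c c] by simp
    have "c = a q" using cw_zero[OF aH[OF q_lt] same[OF a_in[OF q_lt] cc]] True unfolding \<beta>_def by simp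
    then have "a q = c" by simp
    then show ?thesis using cout unfolding a_def q_def by simp
  next
    case False
    then have "\<alpha> + D < N" using sumeq unfolding \<alpha>_def \<beta>_def by simp
    moreover have "\<alpha> + \<delta> < \<alpha> + D" using W2 unfolding \<delta>_def by simp
    ultimately show ?thesis using cwx aqm cout unfolding x_def a_def q_def N_def
      by (intro disjI2 exI[of _ "\<alpha> + D"]) simp
  qed
qed

end

context wood begin

definition periodic :: "nat \<Rightarrow> 'a set \<Rightarrow> bool" where
  "periodic i u \<longleftrightarrow> i < d \<and> u \<in> vertices H nxt \<and> (\<forall>n. (succ i ^^ n) u \<noteq> vt i) \<and> (\<exists>n>0. (succ i ^^ n) u = u)"

lemma finV: "finite (vertices H nxt)" unfolding vertices_def using finH by simp

lemma iter_vert: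
  assumes i: "i < d" and u: "u \<in> vertices H nxt" and nr: "\<forall>n. (succ i ^^ n) u \<noteq> vt i"
  shows "(succ i ^^ n) u \<in> vertices H nxt"
proof (induct n)
  case (Suc n) then show ?case using succ_vert[OF i Suc] nr by simp
qed (simp add: u)

definition UW :: "nat \<Rightarrow> 'a set \<Rightarrow> 'a set set" where "UW i u0 = orb (succ i) u0"

lemma UW_props:
  assumes p: "periodic i u0"
  shows "\<And>y. y \<in> UW i u0 \<Longrightarrow> y \<in> vertices H nxt \<and> y \<noteq> vt i"
    and "\<And>y. y \<in> UW i u0 \<Longrightarrow> succ i y \<in> UW i u0"
    and "finite (UW i u0)"
    and "u0 \<in> UW i u0"
proof -
  have i: "i < d" and u: "u0 \<in> vertices H nxt" and nr: "\<forall>n. (succ i ^^ n) u0 \<noteq> vt i"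
    using p unfolding periodic_def by auto
  show vy: "\<And>y. y \<in> UW i u0 \<Longrightarrow> y \<in> vertices H nxt \<and> y \<noteq> vt i"
    unfolding UW_def orb_def using iter_vert[OF i u nr] nr by auto
  show "\<And>y. y \<in> UW i u0 \<Longrightarrow> succ i y \<in> UW i u0" unfolding UW_def by (rule orb_step)
  show "finite (UW i u0)" using finite_subset[OF _ finV] vy by blast
  show "u0 \<in> UW i u0" unfolding UW_def by simp
qed

lemma UW_perm:
  assumes p: "periodic i u0"
  shows "perm (succ i) (UW i u0)"
proof -
  obtain n where n: "0 < n" "(succ i ^^ n) u0 = u0" using p unfolding periodic_def by blast
  have sub: "succ i ` UW i u0 \<subseteq> UW i u0" using UW_props(2)[OF p] by blast
  have sup: "UW i u0 \<subseteq> succ i ` UW i u0"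
  proof
    fix y assume "y \<in> UW i u0"
    then obtain m where m: "y = (succ i ^^ m) u0" unfolding UW_def orb_def by blast
    have "(succ i ^^ (m + n)) u0 = y" using funpow_add_app[where f="succ i" and m=n and n=m and x=u0] n m
      by (simp add: add.commute)
    moreover have "m + n = Suc (m + n - 1)" using n by simp
    ultimately have "(succ i ^^ Suc (m + n - 1)) u0 = y" by simp
    then have "succ i ((succ i ^^ (m + n - 1)) u0) = y" by simp
    moreover have "(succ i ^^ (m + n - 1)) u0 \<in> UW i u0" unfolding UW_def by simp
    ultimately show "y \<in> succ i ` UW i u0" by blast
  qed
  have im: "succ i ` UW i u0 = UW i u0" using sub sup by blast
  have fin: "finite (UW i u0)" using UW_props(3)[OF p] .
  have "card (succ i ` UW i u0) = card (UW i u0)" using im by simp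
  then have "inj_on (succ i) (UW i u0)" using inj_on_iff_eq_card[OF fin] by blast
  then show ?thesis using im fin unfolding perm_def bij_betw_def by blast
qed

lemma UW_inner:
  assumes p: "periodic i u0" and y: "y \<in> UW i u0"
  shows "inner y"
proof -
  have i: "i < d" using p unfolding periodic_def by simp
  have vy: "y \<in> vertices H nxt" "y \<noteq> vt i" using UW_props(1)[OF p y] by auto
  have "\<forall>k<d. y \<noteq> vt k"
  proof (intro allI impI)
    fix k assume k: "k < d"
    show "y \<noteq> vt k"
    proof
      assume yk: "y = vt k"
      interpret U: perm "succ i" "UW i u0" by (rule UW_perm[OF p])
      define Q where "Q j = (vt j \<in> UW i u0)" for j
      have "Q j" if "j < d" for j
      proof (rule all_mod_up[where Q=Q and t=k])
        show "0 < d" using d3 by simp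
        show "k < d" by fact
        show "Q k" unfolding Q_def using y yk by simp
        show "j < d" by fact
        fix s assume s: "s < d" "Q s"
        then have "s \<noteq> i" using UW_props(1)[OF p] unfolding Q_def by blast
        then have "succ i (vt s) = vt (Suc s mod d)" using succ_vt[OF i s(1)] by simp
        then show "Q (Suc s mod d)" using UW_props(2)[OF p, of "vt s"] s unfolding Q_def by simp
      qed
      then have "vt i \<in> UW i u0" using i unfolding Q_def by simp
      then show False using UW_props(1)[OF p] by blast
    qed
  qed
  then show ?thesis unfolding inner_def using vy by simp
qed

definition CdW :: "nat \<Rightarrow> 'a set \<Rightarrow> 'a set" where "CdW i u0 = out i ` UW i u0"
definition scW :: "nat \<Rightarrow> 'a \<Rightarrow> 'a" where "scW i c = out i (tail nxt (opp c))"

lemma inner_nv: "inner u \<Longrightarrow> k < d \<Longrightarrow> u \<noteq> vt k" unfolding inner_def by blast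
lemma inner_v: "inner u \<Longrightarrow> u \<in> vertices H nxt" unfolding inner_def by blast

lemma out_inner: "inner u \<Longrightarrow> i < d \<Longrightarrow> out i u \<in> W i \<and> tail nxt (out i u) = u \<and> out i u \<in> H"
proof -
  assume u: "inner u" and i: "i < d"
  have v: "u \<in> vertices H nxt" and nv: "u \<noteq> vt i" using inner_v[OF u] inner_nv[OF u i] by auto
  show ?thesis using out_props(1,2)[OF i v nv] out_H[OF i v nv] by simp
qed

lemma out_uniq: "inner u \<Longrightarrow> i < d \<Longrightarrow> h \<in> W i \<Longrightarrow> tail nxt h = u \<Longrightarrow> h = out i u"
proof -
  assume u: "inner u" and i: "i < d" and h: "h \<in> W i" "tail nxt h = u"
  have v: "u \<in> vertices H nxt" and nv: "u \<noteq> vt i" using inner_v[OF u] inner_nv[OF u i] by auto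
  show ?thesis using out_props(3)[OF i v nv h] .
qed

lemma jcW:
  assumes p: "periodic i u0"
  shows "jc H opp nxt (CdW i u0) (scW i) (out i u0)"
proof -
  have i: "i < d" using p unfolding periodic_def by simp
  interpret U: perm "succ i" "UW i u0" by (rule UW_perm[OF p])
  have inn: "\<And>y. y \<in> UW i u0 \<Longrightarrow> inner y" using UW_inner[OF p] .
  have oi: "\<And>y. y \<in> UW i u0 \<Longrightarrow> out i y \<in> W i \<and> tail nxt (out i y) = y \<and> out i y \<in> H"
    using out_inner[OF inn i] .
  have sc_out: "scW i (out i y) = out i (succ i y)" if "y \<in> UW i u0" for y
    unfolding scW_def succ_def ..
  show ?thesis
  proof (unfold_locales)
    show "CdW i u0 \<subseteq> H" unfolding CdW_def using oi by blast
    show "\<And>c. c \<in> CdW i u0 \<Longrightarrow> scW i c \<in> CdW i u0"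
      unfolding CdW_def using sc_out UW_props(2)[OF p] by auto
    show "\<And>c. c \<in> CdW i u0 \<Longrightarrow> tail nxt (scW i c) = tail nxt (opp c)"
    proof -
      fix c assume "c \<in> CdW i u0"
      then obtain y where y: "y \<in> UW i u0" "c = out i y" unfolding CdW_def by blast
      have "succ i y \<in> UW i u0" using UW_props(2)[OF p y(1)] .
      then show "tail nxt (scW i c) = tail nxt (opp c)" using oi sc_out[OF y(1)] y(2) unfolding succ_def by simp
    qed
    show "inj_on (tail nxt) (CdW i u0)" unfolding CdW_def inj_on_def using oi by auto
    show "inj_on (scW i) (CdW i u0)"
    proof (rule inj_onI)
      fix c1 c2 assume "c1 \<in> CdW i u0" "c2 \<in> CdW i u0" and e: "scW i c1 = scW i c2"
      then obtain y1 y2 where y: "y1 \<in> UW i u0" "c1 = out i y1" "y2 \<in> UW i u0" "c2 = out i y2"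
        unfolding CdW_def by blast
      have "out i (succ i y1) = out i (succ i y2)" using e sc_out y by simp
      then have "succ i y1 = succ i y2" using oi[OF UW_props(2)[OF p y(1)]] oi[OF UW_props(2)[OF p y(3)]] by metis
      then have "y1 = y2" using U.inj y unfolding inj_on_def by blast
      then show "c1 = c2" using y by simp
    qed
    show "out i u0 \<in> CdW i u0" unfolding CdW_def using UW_props(4)[OF p] by blast
    show "CdW i u0 \<subseteq> orb (scW i) (out i u0)"
    proof
      fix c assume "c \<in> CdW i u0"
      then obtain y where y: "y \<in> UW i u0" "c = out i y" unfolding CdW_def by blast
      then obtain n where n: "y = (succ i ^^ n) u0" unfolding UW_def orb_def by blast
      have "(scW i ^^ k) (out i u0) = out i ((succ i ^^ k) u0)" for k
      proof (induct k)
        case (Suc k)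
        have "(succ i ^^ k) u0 \<in> UW i u0" unfolding UW_def by simp
        then show ?case using Suc sc_out by simp
      qed simp
      then have "c = (scW i ^^ n) (out i u0)" using y n by simp
      then show "c \<in> orb (scW i) (out i u0)" by simp
    qed
    show "CdW i u0 \<inter> opp ` CdW i u0 = {}"
    proof (rule ccontr)
      assume "CdW i u0 \<inter> opp ` CdW i u0 \<noteq> {}"
      then obtain y1 y2 where y: "y1 \<in> UW i u0" "y2 \<in> UW i u0" "out i y1 = opp (out i y2)"
        unfolding CdW_def by blast
      have "tail nxt (opp (out i y2)) = y1" using y(3) oi[OF y(1)] by simp
      then have "0 < cw_dist nxt (out i y1) (opp (out i y2))"
        using warith(1)[OF i inn[OF y(1)]] oi[OF y(2)] by blast
      then show False using y(3) cw_self by simp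
    qed
  qed
qed

end

context wood begin

abbreviation f0 :: "'a set" where "f0 \<equiv> face opp nxt (ou 0)"

definition ECW :: "nat \<Rightarrow> 'a set \<Rightarrow> 'a set" where "ECW i u0 = CdW i u0 \<union> opp ` CdW i u0"

definition adjW :: "nat \<Rightarrow> 'a set \<Rightarrow> ('a set \<times> 'a set) set" where
  "adjW i u0 = {(face opp nxt h, face opp nxt (opp h)) | h. h \<in> H \<and> h \<notin> ECW i u0}"

definition OutS :: "nat \<Rightarrow> 'a set \<Rightarrow> 'a set set" where
  "OutS i u0 = {f. (f0, f) \<in> (adjW i u0)\<^sup>*}"

lemma f0_face: "f0 \<in> faces H opp nxt" unfolding faces_def using ou_H d3 by simp

lemma newcycle:
  assumes p: "periodic t u0" and t2: "t2 < d"
    and I1: "f0 \<notin> In"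
    and I2: "\<And>f g. (f, g) \<in> adjW t u0 \<Longrightarrow> f \<in> In \<Longrightarrow> g \<in> In"
    and G: "\<And>u. u \<in> UW t u0 \<Longrightarrow> out t2 u = out t u \<or> (out t2 u \<notin> ECW t u0 \<and> face opp nxt (out t2 u) \<in> In)"
    and B: "\<exists>u\<in>UW t u0. out t2 u \<noteq> out t u"
  shows "\<exists>u1. periodic t2 u1 \<and> card (OutS t u0) < card (OutS t2 u1)"
proof -
  have t: "t < d" using p unfolding periodic_def by simp
  interpret J: jc H opp nxt "CdW t u0" "scW t" "out t u0" by (rule jcW[OF p])
  have JEC: "J.EC = ECW t u0" unfolding J.EC_def J.Xd_def ECW_def ..
  have Jadj: "J.adj = adjW t u0" unfolding J.adj_def adjW_def JEC ..
  define U where "U = UW t u0"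
  have tailCd: "tail nxt ` CdW t u0 = U" unfolding CdW_def U_def
    using out_inner[OF UW_inner[OF p] t] by (auto simp: image_image)
  have I2s: "(f, g) \<in> adjW t u0 \<Longrightarrow> g \<in> In \<Longrightarrow> f \<in> In" for f g
    using I2 J.adj_sym Jadj by metis
  have Icl: "(f, g) \<in> (adjW t u0)\<^sup>* \<Longrightarrow> f \<in> In \<Longrightarrow> g \<in> In" for f g
    by (induct rule: rtrancl_induct) (auto intro: I2)
  have Icl': "(f, g) \<in> (adjW t u0)\<^sup>* \<Longrightarrow> g \<in> In \<Longrightarrow> f \<in> In" for f g
    by (induct rule: converse_rtrancl_induct) (auto intro: I2s)
  define X where "X = {w \<in> vertices H nxt. w \<notin> U \<and> (\<forall>g\<in>w. face opp nxt g \<in> In)}"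
  define Y where "Y = U \<union> X"
  have Uinn: "\<And>y. y \<in> U \<Longrightarrow> inner y" unfolding U_def using UW_inner[OF p] .
  have Xinn: "inner w" if w: "w \<in> X" for w
  proof -
    have "w \<noteq> vt k" if k: "k < d" for k
    proof
      assume "w = vt k"
      then have "ou k \<in> w" using tail_mem[of "ou k" "ou k"] by simp
      then have "face opp nxt (ou k) \<in> In" using w unfolding X_def by blast
      then show False using face_ou[OF k] I1 by simp
    qed
    then show ?thesis using w unfolding X_def inner_def by blast
  qed
  have Yinn: "\<And>y. y \<in> Y \<Longrightarrow> inner y" unfolding Y_def using Uinn Xinn by blast
  define Q where "Q y \<longleftrightarrow> (y \<in> U \<and> out t2 y = out t y) \<or> (out t2 y \<notin> ECW t u0 \<and> face opp nxt (out t2 y) \<in> In)" for y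
  have QY: "Q y" if y: "y \<in> Y" for y
  proof (cases "y \<in> U")
    case True then show ?thesis unfolding Q_def using G U_def by blast
  next
    case False
    then have yX: "y \<in> X" using y unfolding Y_def by blast
    define h where "h = out t2 y"
    have h: "h \<in> W t2" "tail nxt h = y" "h \<in> H" unfolding h_def using out_inner[OF Xinn[OF yX] t2] by auto
    have hy: "h \<in> y" using tail_mem[of h h] h(2) by simp
    then have "face opp nxt h \<in> In" using yX unfolding X_def by blast
    moreover have "h \<notin> ECW t u0"
    proof -
      have "tail nxt h \<notin> tail nxt ` CdW t u0" using tailCd h(2) False by simp
      from J.noncyc_vertex[OF h(3) this, of h] show ?thesis using tail_mem[of h h] JEC by simp
    qed
    ultimately show ?thesis unfolding Q_def h_def by blast
  qed
  have Ycl: "succ t2 y \<in> Y" if y: "y \<in> Y" for y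
  proof -
    have yi: "inner y" using Yinn[OF y] .
    from QY[OF y] show ?thesis unfolding Q_def
    proof
      assume a: "y \<in> U \<and> out t2 y = out t y"
      then have "succ t2 y = succ t y" unfolding succ_def by simp
      then show ?thesis using UW_props(2)[OF p] a unfolding Y_def U_def by simp
    next
      assume a: "out t2 y \<notin> ECW t u0 \<and> face opp nxt (out t2 y) \<in> In"
      define h where "h = out t2 y"
      have hH: "h \<in> H" unfolding h_def using out_inner[OF yi t2] by simp
      have oh: "opp h \<in> H" "opp h \<notin> ECW t u0" using opp_in[OF hH] J.opp_EC_iff[OF hH] a JEC unfolding h_def by auto
      have "(face opp nxt h, face opp nxt (opp h)) \<in> adjW t u0" using J.adj_I[OF hH] a JEC Jadj unfolding h_def by simp
      then have foh: "face opp nxt (opp h) \<in> In" using I2 a unfolding h_def by blast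
      define w where "w = tail nxt (opp h)"
      have sw: "succ t2 y = w" unfolding succ_def w_def h_def ..
      show ?thesis
      proof (cases "w \<in> U")
        case True then show ?thesis using sw unfolding Y_def by simp
      next
        case False
        then have nc: "tail nxt (opp h) \<notin> tail nxt ` CdW t u0" using tailCd unfolding w_def by simp
        have "\<forall>g\<in>w. face opp nxt g \<in> In"
        proof
          fix g assume "g \<in> w"
          then have "(face opp nxt (opp h), face opp nxt g) \<in> J.adj\<^sup>*" using J.noncyc_vertex[OF oh(1) nc] unfolding w_def by blast
          then show "face opp nxt g \<in> In" using Icl foh Jadj by simp
        qed
        moreover have "w \<in> vertices H nxt" unfolding w_def using vert_tail[OF oh(1)] .
        ultimately show ?thesis using False sw unfolding Y_def X_def by blast
      qed
    qed
  qed
  have finY: "finite Y" unfolding Y_def X_def using UW_props(3)[OF p] finV U_def by simp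
  have u0Y: "u0 \<in> Y" unfolding Y_def U_def using UW_props(4)[OF p] by simp
  define s where "s n = (succ t2 ^^ n) u0" for n
  have sY: "s n \<in> Y" for n unfolding s_def by (induct n) (auto simp: u0Y Ycl)
  have "\<not> inj_on s {0..card Y}"
  proof
    assume "inj_on s {0..card Y}"
    moreover have "s ` {0..card Y} \<subseteq> Y" using sY by auto
    ultimately have "card {0..card Y} \<le> card Y" using card_inj_on_le[OF _ _ finY] by blast
    then show False by simp
  qed
  then obtain a b where ab: "a \<noteq> b" "s a = s b" unfolding inj_on_def by auto
  obtain a b where ab: "a < b" "s a = s b"
  proof (cases "a < b")
    case True then show ?thesis using that ab by blast
  next
    case False then show ?thesis using that[of b a] ab by simp
  qed
  define u1 where "u1 = s a"
  have su1: "(succ t2 ^^ n) u1 = s (a + n)" for n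
    unfolding u1_def s_def using funpow_add_app[where f="succ t2" and m=a and n=n and x=u0] by simp
  have v1: "u1 \<in> vertices H nxt" unfolding u1_def using inner_v[OF Yinn[OF sY]] .
  have nr1: "\<forall>n. (succ t2 ^^ n) u1 \<noteq> vt t2" using su1 inner_nv[OF Yinn[OF sY] t2] by simp
  have pe1: "\<exists>n>0. (succ t2 ^^ n) u1 = u1"
    using su1[of "b - a"] ab unfolding u1_def by (intro exI[of _ "b - a"]) simp
  have per1: "periodic t2 u1" unfolding periodic_def using t2 v1 nr1 pe1 by blast
  define U1 where "U1 = UW t2 u1"
  have U1Y: "U1 \<subseteq> Y"
  proof
    fix y assume "y \<in> U1"
    then obtain n where "y = (succ t2 ^^ n) u1" unfolding U1_def UW_def orb_def by blast
    then show "y \<in> Y" using su1 sY by simp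
  qed
  interpret J2: jc H opp nxt "CdW t2 u1" "scW t2" "out t2 u1" by (rule jcW[OF per1])
  have J2EC: "J2.EC = ECW t2 u1" unfolding J2.EC_def J2.Xd_def ECW_def ..
  have J2adj: "J2.adj = adjW t2 u1" unfolding J2.adj_def adjW_def J2EC ..
  have ex: "\<exists>y\<in>U1. out t2 y \<notin> ECW t u0 \<and> face opp nxt (out t2 y) \<in> In"
  proof (rule ccontr)
    assume "\<not> ?thesis"
    then have all: "\<And>y. y \<in> U1 \<Longrightarrow> y \<in> U \<and> out t2 y = out t y" using QY U1Y unfolding Q_def by blast
    interpret PU: perm "succ t" U unfolding U_def by (rule UW_perm[OF p])
    have u1U1: "u1 \<in> U1" unfolding U1_def using UW_props(4)[OF per1] .
    have u1U: "u1 \<in> U" using all[OF u1U1] by simp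
    have "orb (succ t) u1 \<subseteq> U1"
    proof (rule orb_closed)
      fix y assume y: "y \<in> U1"
      have "succ t y = succ t2 y" using all[OF y] unfolding succ_def by simp
      then show "succ t y \<in> U1" using UW_props(2)[OF per1] y unfolding U1_def by simp
    qed (rule u1U1)
    moreover have "orb (succ t) u1 = U"
      using PU.orb_eq[of u0 u1] u1U UW_props(4)[OF p] unfolding U_def UW_def by simp
    ultimately have "U \<subseteq> U1" by simp
    then show False using B all unfolding U_def by blast
  qed
  then obtain y1 where y1: "y1 \<in> U1" "out t2 y1 \<notin> ECW t u0" "face opp nxt (out t2 y1) \<in> In" by blast
  define g where "g = out t2 y1"
  have gCd: "g \<in> CdW t2 u1" unfolding g_def CdW_def U1_def using y1(1) U1_def by blast
  have gH: "g \<in> H" using J2.Cd_H[OF gCd] .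
  have fogIn: "face opp nxt (opp g) \<in> In"
  proof -
    have "(face opp nxt g, face opp nxt (opp g)) \<in> adjW t u0" using J.adj_I[OF gH] y1(2) JEC Jadj unfolding g_def by simp
    then show ?thesis using I2 y1(3) unfolding g_def by blast
  qed
  have sub: "(f0, f) \<in> (adjW t2 u1)\<^sup>* \<and> f \<notin> In" if "(f0, f) \<in> (adjW t u0)\<^sup>*" for f
    using that
  proof (induct rule: rtrancl_induct)
    case base then show ?case using I1 by simp
  next
    case (step f1 f2)
    from step(2) obtain h where h: "h \<in> H" "h \<notin> ECW t u0" "f1 = face opp nxt h" "f2 = face opp nxt (opp h)"
      unfolding adjW_def by blast
    have f1: "f1 \<notin> In" using step(3) by simp
    have f2: "f2 \<notin> In" using I2 step(2) f1 I2s by blast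
    have "h \<notin> ECW t2 u1"
    proof
      assume "h \<in> ECW t2 u1"
      then obtain y where y: "y \<in> U1" "h = out t2 y \<or> h = opp (out t2 y)"
        unfolding ECW_def CdW_def U1_def by blast
      have yi: "inner y" using Yinn U1Y y(1) by blast
      have oH: "out t2 y \<in> H" using out_inner[OF yi t2] by simp
      from QY[of y] U1Y y(1) have "Q y" by blast
      then show False unfolding Q_def
      proof
        assume a: "y \<in> U \<and> out t2 y = out t y"
        then have "out t2 y \<in> CdW t u0" unfolding CdW_def U_def by simp
        then show False using y(2) h(2) unfolding ECW_def by blast
      next
        assume a: "out t2 y \<notin> ECW t u0 \<and> face opp nxt (out t2 y) \<in> In"
        show False using y(2)
        proof
          assume "h = out t2 y" then show False using a f1 h(3) by simp
        next
          assume hy: "h = opp (out t2 y)"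
          have "(face opp nxt (out t2 y), face opp nxt (opp (out t2 y))) \<in> adjW t u0"
            using J.adj_I[OF oH] a JEC Jadj by simp
          then have "face opp nxt (opp (out t2 y)) \<in> In" using I2 a by blast
          then show False using f1 h(3) hy by simp
        qed
      qed
    qed
    then have "(f1, f2) \<in> adjW t2 u1" unfolding adjW_def using h by blast
    then have "(f0, f2) \<in> (adjW t2 u1)\<^sup>*" using step(3) by (meson rtrancl.rtrancl_into_rtrancl)
    then show ?case using f2 by simp
  qed
  have subset: "OutS t u0 \<subseteq> OutS t2 u1" unfolding OutS_def using sub by blast
  have notin: "f \<notin> OutS t u0" if "f \<in> In" for f unfolding OutS_def using sub that by blast
  have new: "\<exists>f\<in>OutS t2 u1. f \<in> In"
  proof -
    have "f0 \<in> J2.Fx \<union> J2.Fc" using J2.complete[OF ou_H] d3 by simp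
    then show ?thesis
    proof
      assume "f0 \<in> J2.Fc"
      then have a: "(face opp nxt (out t2 u1), f0) \<in> J2.adj\<^sup>*" using J2.Fc_class by simp
      have "face opp nxt g \<in> J2.Fc" using J2.Fc_seed[OF gCd] .
      then have b: "(face opp nxt (out t2 u1), face opp nxt g) \<in> J2.adj\<^sup>*" using J2.Fc_class by simp
      have "(f0, face opp nxt g) \<in> J2.adj\<^sup>*" using rtrancl_trans[OF J2.adj_rtr_sym[OF a] b] .
      then have "face opp nxt g \<in> OutS t2 u1" unfolding OutS_def J2adj by simp
      then show ?thesis using y1(3) unfolding g_def by blast
    next
      assume "f0 \<in> J2.Fx"
      then have a: "(face opp nxt (J2.xo (out t2 u1)), f0) \<in> J2.adj\<^sup>*" using J2.Fx_class by simp
      have "face opp nxt (opp g) \<in> J2.Fx" using J2.Fx_seed[OF J2.opp_Cd[OF gCd]] .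
      then have b: "(face opp nxt (J2.xo (out t2 u1)), face opp nxt (opp g)) \<in> J2.adj\<^sup>*" using J2.Fx_class by simp
      have "(f0, face opp nxt (opp g)) \<in> J2.adj\<^sup>*" using rtrancl_trans[OF J2.adj_rtr_sym[OF a] b] .
      then have "face opp nxt (opp g) \<in> OutS t2 u1" unfolding OutS_def J2adj by simp
      then show ?thesis using fogIn by blast
    qed
  qed
  have fin2: "finite (OutS t2 u1)"
  proof (rule finite_subset)
    show "OutS t2 u1 \<subseteq> faces H opp nxt" unfolding OutS_def using J2.adj_faces f0_face J2adj by auto
    show "finite (faces H opp nxt)" unfolding faces_def using finH by simp
  qed
  have "OutS t u0 \<subset> OutS t2 u1" using subset new notin by blast
  then have "card (OutS t u0) < card (OutS t2 u1)" using fin2 by (rule psubset_card_mono[rotated])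
  then show ?thesis using per1 by blast
qed

end

context wood begin

lemma descent1:
  assumes p: "periodic t u0"
  shows "\<exists>t2 u1. periodic t2 u1 \<and> card (OutS t u0) < card (OutS t2 u1)"
proof -
  have t: "t < d" using p unfolding periodic_def by simp
  interpret J: jc H opp nxt "CdW t u0" "scW t" "out t u0" by (rule jcW[OF p])
  have JEC: "J.EC = ECW t u0" unfolding J.EC_def J.Xd_def ECW_def ..
  have Jadj: "J.adj = adjW t u0" unfolding J.adj_def adjW_def JEC ..
  define U where "U = UW t u0"
  have Uinn: "\<And>y. y \<in> U \<Longrightarrow> inner y" unfolding U_def using UW_inner[OF p] .
  define isW where "isW s \<longleftrightarrow> (\<forall>v\<in>U. out s v = out t v)" for s
  have pre_arc: "\<exists>hp. hp \<in> CdW t u0 \<and> J.pre (out t u) = hp \<and> tail nxt (opp hp) = u \<and> (\<exists>v\<in>U. hp = out t v)"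
    if u: "u \<in> U" for u
  proof -
    have cCd: "out t u \<in> CdW t u0" unfolding CdW_def using u U_def by blast
    have hp: "J.pre (out t u) \<in> CdW t u0" using J.pre_in[OF cCd] .
    then obtain v where v: "v \<in> U" "J.pre (out t u) = out t v" unfolding CdW_def U_def by blast
    have "tail nxt (scW t (J.pre (out t u))) = tail nxt (opp (J.pre (out t u)))" using J.sc_tail[OF hp] .
    then have "tail nxt (opp (J.pre (out t u))) = u" using J.sc_pre[OF cCd] out_inner[OF Uinn[OF u] t] by simp
    then show ?thesis using hp v by blast
  qed
  have stepP: "out (Suc s mod d) u = out t u \<or> (out (Suc s mod d) u \<notin> ECW t u0 \<and> face opp nxt (out (Suc s mod d) u) \<in> J.Fx)"
    if s: "s < d" "isW s" and u: "u \<in> U" for s u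
  proof -
    define c where "c = out t u"
    have cCd: "c \<in> CdW t u0" unfolding c_def CdW_def using u U_def by blast
    obtain hp where hp: "hp \<in> CdW t u0" "J.pre c = hp" "tail nxt (opp hp) = u" "\<exists>v\<in>U. hp = out t v"
      using pre_arc[OF u] unfolding c_def by blast
    obtain v where v: "v \<in> U" "hp = out t v" using hp(4) by blast
    have hpW: "hp \<in> W s" using s(2) v out_inner[OF Uinn[OF v(1)] s(1)] unfolding isW_def by simp
    have osu: "out s u = c" using s(2) u unfolding isW_def c_def by simp
    have pxc: "J.px c = cw_dist nxt c (opp hp)" unfolding J.px_def J.xo_def hp(2) ..
    obtain m where m: "m < cw_dist nxt (out s u) (opp hp)" "out (Suc s mod d) u = (nxt ^^ m) (out s u)"
      using warith(2)[OF s(1) Uinn[OF u] hpW hp(3)] by blast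
    show ?thesis
    proof (cases "m = 0")
      case True then show ?thesis using m osu c_def by simp
    next
      case False
      have mpx: "m < J.px c" using m(1) osu pxc by simp
      have "(nxt ^^ m) c \<notin> J.EC" using J.not_EC_pos[OF cCd] False mpx J.px_props(2)[OF cCd] by simp
      moreover have "face opp nxt ((nxt ^^ m) c) \<in> J.Fx" using J.rotA[OF cCd] False mpx by simp
      ultimately show ?thesis using m osu JEC by simp
    qed
  qed
  have stepM: "out ((s + d - 1) mod d) u = out t u \<or> (out ((s + d - 1) mod d) u \<notin> ECW t u0 \<and> face opp nxt (out ((s + d - 1) mod d) u) \<in> J.Fc)"
    if s: "s < d" "isW s" and u: "u \<in> U" for s u
  proof -
    define c where "c = out t u"
    have cCd: "c \<in> CdW t u0" unfolding c_def CdW_def using u U_def by blast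
    obtain hp where hp: "hp \<in> CdW t u0" "J.pre c = hp" "tail nxt (opp hp) = u" "\<exists>v\<in>U. hp = out t v"
      using pre_arc[OF u] unfolding c_def by blast
    obtain v where v: "v \<in> U" "hp = out t v" using hp(4) by blast
    have hpW: "hp \<in> W s" using s(2) v out_inner[OF Uinn[OF v(1)] s(1)] unfolding isW_def by simp
    have osu: "out s u = c" using s(2) u unfolding isW_def c_def by simp
    have pxc: "J.px c = cw_dist nxt c (opp hp)" unfolding J.px_def J.xo_def hp(2) ..
    from warith(3)[OF s(1) Uinn[OF u] hpW hp(3)]
    show ?thesis
    proof
      assume "out ((s + d - 1) mod d) u = out s u" then show ?thesis using osu c_def by simp
    next
      assume "\<exists>m. cw_dist nxt (out s u) (opp hp) < m \<and> m < deg (out s u) \<and> out ((s + d - 1) mod d) u = (nxt ^^ m) (out s u)"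
      then obtain m where m: "J.px c < m" "m < deg c" "out ((s + d - 1) mod d) u = (nxt ^^ m) c"
        using osu pxc by auto
      have "(nxt ^^ m) c \<notin> J.EC" using J.not_EC_pos[OF cCd] m J.px_props(1)[OF cCd] by simp
      moreover have "face opp nxt ((nxt ^^ m) c) \<in> J.Fc" using J.rotB[OF cCd] m by simp
      ultimately show ?thesis using m JEC by simp
    qed
  qed
  have u0U: "u0 \<in> U" unfolding U_def using UW_props(4)[OF p] .
  have notall: "\<not> (\<forall>j<d. isW j)"
  proof
    assume all: "\<forall>j<d. isW j"
    obtain j where j: "j < d" "out j u0 \<noteq> out 0 u0" using inner_W1[OF Uinn[OF u0U]] by blast
    have "out j u0 = out t u0" "out 0 u0 = out t u0" using all j(1) d3 u0U unfolding isW_def by auto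
    then show False using j(2) by simp
  qed
  have isWt: "isW t" unfolding isW_def by simp
  have f0H: "f0 \<in> J.Fx \<union> J.Fc" using J.complete[OF ou_H] d3 by simp
  have disj: "J.Fx \<inter> J.Fc = {}" by (rule J.jordan)
  show ?thesis
  proof (cases "f0 \<in> J.Fc")
    case True
    then have nFx: "f0 \<notin> J.Fx" using disj by blast
    obtain s where s: "s < d" "isW s" "\<not> isW (Suc s mod d)"
    proof (rule ccontr)
      assume "\<not> thesis"
      then have st: "\<And>s. s < d \<Longrightarrow> isW s \<Longrightarrow> isW (Suc s mod d)" using that by blast
      have "\<forall>j<d. isW j" using all_mod_up[where Q=isW, OF _ st t isWt] d3 by simp
      then show False using notall by simp
    qed
    have "\<exists>u1. periodic (Suc s mod d) u1 \<and> card (OutS t u0) < card (OutS (Suc s mod d) u1)"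
    proof (rule newcycle[OF p _ nFx])
      show "Suc s mod d < d" using s d3 by simp
      show "\<And>f g. (f, g) \<in> adjW t u0 \<Longrightarrow> f \<in> J.Fx \<Longrightarrow> g \<in> J.Fx" using J.Fx_cl Jadj by blast
      show "\<And>u. u \<in> UW t u0 \<Longrightarrow> out (Suc s mod d) u = out t u \<or> (out (Suc s mod d) u \<notin> ECW t u0 \<and> face opp nxt (out (Suc s mod d) u) \<in> J.Fx)"
        using stepP[OF s(1,2)] U_def by blast
      show "\<exists>u\<in>UW t u0. out (Suc s mod d) u \<noteq> out t u" using s(3) U_def unfolding isW_def by blast
    qed
    then show ?thesis by blast
  next
    case False
    then have Fx: "f0 \<notin> J.Fc" by simp
    obtain s where s: "s < d" "isW s" "\<not> isW ((s + d - 1) mod d)"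
    proof (rule ccontr)
      assume "\<not> thesis"
      then have st: "\<And>s. s < d \<Longrightarrow> isW s \<Longrightarrow> isW ((s + d - 1) mod d)" using that by blast
      have "\<forall>j<d. isW j" using all_mod_down[where Q=isW, OF _ st t isWt] d3 by simp
      then show False using notall by simp
    qed
    have "\<exists>u1. periodic ((s + d - 1) mod d) u1 \<and> card (OutS t u0) < card (OutS ((s + d - 1) mod d) u1)"
    proof (rule newcycle[OF p _ Fx])
      show "(s + d - 1) mod d < d" using s d3 by simp
      show "\<And>f g. (f, g) \<in> adjW t u0 \<Longrightarrow> f \<in> J.Fc \<Longrightarrow> g \<in> J.Fc" using J.Fc_cl Jadj by blast
      show "\<And>u. u \<in> UW t u0 \<Longrightarrow> out ((s + d - 1) mod d) u = out t u \<or> (out ((s + d - 1) mod d) u \<notin> ECW t u0 \<and> face opp nxt (out ((s + d - 1) mod d) u) \<in> J.Fc)"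
        using stepM[OF s(1,2)] U_def by blast
      show "\<exists>u\<in>UW t u0. out ((s + d - 1) mod d) u \<noteq> out t u" using s(3) U_def unfolding isW_def by blast
    qed
    then show ?thesis by blast
  qed
qed

lemma adjW_faces: "(f, g) \<in> (adjW i u0)\<^sup>* \<Longrightarrow> f \<in> faces H opp nxt \<Longrightarrow> g \<in> faces H opp nxt"
proof (induct rule: rtrancl_induct)
  case (step y z) then show ?case unfolding adjW_def faces_def using opp_in by blast
qed simp

lemma OutS_faces: "OutS i u0 \<subseteq> faces H opp nxt"
  unfolding OutS_def using adjW_faces f0_face by blast

lemma finF: "finite (faces H opp nxt)" unfolding faces_def using finH by simp

lemma no_periodic: "\<not> periodic t u0"
proof -
  have "card (faces H opp nxt) - card (OutS t u0) = n \<Longrightarrow> \<not> periodic t u0" for n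
  proof (induct n arbitrary: t u0 rule: less_induct)
    case (less n)
    show ?case
    proof
      assume "periodic t u0"
      then obtain t2 u1 where tu: "periodic t2 u1" "card (OutS t u0) < card (OutS t2 u1)"
        using descent1 by blast
      have "card (OutS t2 u1) \<le> card (faces H opp nxt)" using card_mono[OF finF OutS_faces] .
      then have "card (faces H opp nxt) - card (OutS t2 u1) < n" using tu(2) less.prems by simp
      then show False using less.hyps tu(1) by blast
    qed
  qed
  then show ?thesis by blast
qed

lemma closed_periodic:
  assumes i: "i < d" and fin: "finite Y" and Yv: "Y \<subseteq> vertices H nxt" and nr: "vt i \<notin> Y"
    and y: "y \<in> Y" and cl: "\<And>z. z \<in> Y \<Longrightarrow> succ i z \<in> Y"
  shows False
proof -
  define s where "s n = (succ i ^^ n) y" for n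
  have sY: "s n \<in> Y" for n unfolding s_def by (induct n) (auto simp: y cl)
  have "\<not> inj_on s {0..card Y}"
  proof
    assume "inj_on s {0..card Y}"
    moreover have "s ` {0..card Y} \<subseteq> Y" using sY by auto
    ultimately have "card {0..card Y} \<le> card Y" using card_inj_on_le[OF _ _ fin] by blast
    then show False by simp
  qed
  then obtain a b where ab: "a \<noteq> b" "s a = s b" unfolding inj_on_def by auto
  obtain a b where ab: "a < b" "s a = s b"
  proof (cases "a < b")
    case True then show ?thesis using that ab by blast
  next
    case False then show ?thesis using that[of b a] ab by simp
  qed
  define u1 where "u1 = s a"
  have su1: "(succ i ^^ n) u1 = s (a + n)" for n
    unfolding u1_def s_def using funpow_add_app[where f="succ i" and m=a and n=n and x=y] by simp
  have v1: "u1 \<in> vertices H nxt" unfolding u1_def using Yv sY by blast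
  have nr1: "\<forall>n. (succ i ^^ n) u1 \<noteq> vt i" using su1 sY nr by metis
  have pe1: "\<exists>n>0. (succ i ^^ n) u1 = u1"
    using su1[of "b - a"] ab unfolding u1_def by (intro exI[of _ "b - a"]) simp
  have "periodic i u1" unfolding periodic_def using i v1 nr1 pe1 by blast
  then show False using no_periodic by blast
qed

lemma reach_root:
  assumes i: "i < d" and u: "u \<in> vertices H nxt"
  shows "\<exists>n. (succ i ^^ n) u = vt i"
proof (rule ccontr)
  assume "\<not> ?thesis"
  then have nr: "\<forall>n. (succ i ^^ n) u \<noteq> vt i" by blast
  define Y where "Y = {(succ i ^^ n) u | n. True}"
  have Yv: "Y \<subseteq> vertices H nxt" unfolding Y_def using iter_vert[OF i u nr] by blast
  have fin: "finite Y" using finite_subset[OF Yv finV] .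
  have "vt i \<notin> Y" unfolding Y_def using nr by blast
  moreover have "u \<in> Y" unfolding Y_def by (auto intro: exI[of _ 0])
  moreover have "\<And>z. z \<in> Y \<Longrightarrow> succ i z \<in> Y" unfolding Y_def by (auto intro: exI[of _ "Suc n" for n])
  ultimately show False using closed_periodic[OF i fin Yv] by blast
qed

lemma head_out: "i < d \<Longrightarrow> y \<in> vertices H nxt \<Longrightarrow> y \<noteq> vt i \<Longrightarrow> (y, succ i y) \<in> dir_rel opp nxt (W i)"
  unfolding dir_rel_def succ_def head_def using out_props(1,2) by blast

lemma reach_dir:
  assumes i: "i < d" and u: "u \<in> vertices H nxt"
  shows "(u, vt i) \<in> (dir_rel opp nxt (W i))\<^sup>*"
proof -
  obtain n where n: "(succ i ^^ n) u = vt i" using reach_root[OF i u] by blast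
  define m where "m = (LEAST n. (succ i ^^ n) u = vt i)"
  have m: "(succ i ^^ m) u = vt i" unfolding m_def using n by (rule LeastI)
  have lt: "k < m \<Longrightarrow> (succ i ^^ k) u \<noteq> vt i" for k unfolding m_def using not_less_Least by blast
  have "k \<le> m \<Longrightarrow> (u, (succ i ^^ k) u) \<in> (dir_rel opp nxt (W i))\<^sup>* \<and> (succ i ^^ k) u \<in> vertices H nxt" for k
  proof (induct k)
    case 0 then show ?case using u by simp
  next
    case (Suc k)
    then have IH: "(u, (succ i ^^ k) u) \<in> (dir_rel opp nxt (W i))\<^sup>*" "(succ i ^^ k) u \<in> vertices H nxt" by auto
    have ne: "(succ i ^^ k) u \<noteq> vt i" using lt Suc by simp
    have "((succ i ^^ k) u, succ i ((succ i ^^ k) u)) \<in> dir_rel opp nxt (W i)" using head_out[OF i IH(2) ne] .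
    then show ?case using IH succ_vert[OF i IH(2) ne] by (simp add: rtrancl.rtrancl_into_rtrancl)
  qed
  then show ?thesis using m by (metis order_refl)
qed

lemma W_root': "i < d \<Longrightarrow> h \<in> W i \<Longrightarrow> tail nxt h \<noteq> vt i"
  using W_root by blast

lemma no_opp: assumes i: "i < d" and h: "h \<in> W i" and oh: "opp h \<in> W i" shows False
proof -
  have hH: "h \<in> H" using W_sub[OF i] h by blast
  define y where "y = tail nxt h"
  define w where "w = tail nxt (opp h)"
  have yv: "y \<in> vertices H nxt" "y \<noteq> vt i" unfolding y_def using vert_tail[OF hH] W_root'[OF i h] by auto
  have wv: "w \<in> vertices H nxt" "w \<noteq> vt i" unfolding w_def using vert_tail[OF opp_in[OF hH]] W_root'[OF i oh] by auto
  have oy: "out i y = h" using out_props(3)[OF i yv h] y_def by simp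
  have ow: "out i w = opp h" using out_props(3)[OF i wv oh] w_def by simp
  have sy: "succ i y = w" unfolding succ_def oy w_def ..
  have sw: "succ i w = y" unfolding succ_def ow y_def using hH by simp
  have f: "finite {y, w}" by simp
  have sub: "{y, w} \<subseteq> vertices H nxt" using yv wv by blast
  have nr: "vt i \<notin> {y, w}" using yv wv by blast
  have yy: "y \<in> {y, w}" by simp
  have cl: "\<And>z. z \<in> {y, w} \<Longrightarrow> succ i z \<in> {y, w}" using sy sw by blast
  show False by (rule closed_periodic[OF i f sub nr yy cl])
qed

lemma no_cycle: assumes i: "i < d" shows "\<not> has_cycle opp nxt (W i)"
proof
  assume hc: "has_cycle opp nxt (W i)"
  obtain hs where hsall: "hs \<noteq> [] \<and> set hs \<subseteq> W i \<union> opp ` W i \<and>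
        distinct (map (\<lambda>h. {h, opp h}) hs) \<and>
        distinct (map (tail nxt) hs) \<and>
        (\<forall>j<length hs. head opp nxt (hs ! j) = tail nxt (hs ! (Suc j mod length hs)))"
    using hc unfolding has_cycle_def by (rule exE) assumption
  have hs: "hs \<noteq> []" "set hs \<subseteq> W i \<union> opp ` W i"
    "distinct (map (\<lambda>h. {h, opp h}) hs)" "distinct (map (tail nxt) hs)"
    "\<forall>j<length hs. head opp nxt (hs ! j) = tail nxt (hs ! (Suc j mod length hs))"
    using hsall by simp_all
  define k where "k = length hs"
  have k0: "0 < k" unfolding k_def using hs(1) by simp
  define T where "T = set (map (tail nxt) hs)"
  have hsH: "hs ! j \<in> H" if "j < k" for j
  proof -
    have "hs ! j \<in> set hs" using that unfolding k_def by simp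
    then have "hs ! j \<in> W i \<union> opp ` W i" using hs(2) by blast
    then show ?thesis
    proof
      assume "hs ! j \<in> W i" then show ?thesis using W_sub[OF i] by blast
    next
      assume "hs ! j \<in> opp ` W i"
      then obtain g where g: "g \<in> W i" "hs ! j = opp g" by blast
      have "g \<in> H" using W_sub[OF i] g(1) by blast
      then show ?thesis using opp_in[of g] g(2) by simp
    qed
  qed
  define w where "w j = (if hs ! j \<in> W i then hs ! j else opp (hs ! j))" for j
  have wW: "w j \<in> W i" if "j < k" for j
  proof (cases "hs ! j \<in> W i")
    case True then show ?thesis unfolding w_def by simp
  next
    case False
    have "hs ! j \<in> set hs" using that unfolding k_def by simp
    then obtain g where g: "g \<in> W i" "hs ! j = opp g" using hs(2) False by blast
    have "g \<in> H" using W_sub[OF i] g by blast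
    then show ?thesis unfolding w_def using False g by simp
  qed
  have wT: "tail nxt (w j) \<in> T" if j: "j < k" for j
  proof (cases "hs ! j \<in> W i")
    case True then show ?thesis unfolding w_def T_def using j unfolding k_def by auto
  next
    case False
    have "tail nxt (opp (hs ! j)) = tail nxt (hs ! (Suc j mod k))" using hs(5) j unfolding k_def head_def by blast
    moreover have "Suc j mod k < k" using k0 by simp
    ultimately show ?thesis unfolding w_def T_def using False unfolding k_def by auto
  qed
  have edge_w: "{w j, opp (w j)} = {hs ! j, opp (hs ! j)}" if "j < k" for j
    unfolding w_def using hsH[OF that] by auto
  have inj: "inj_on (\<lambda>j. tail nxt (w j)) {..<k}"
  proof (rule inj_onI)
    fix j1 j2 assume j: "j1 \<in> {..<k}" "j2 \<in> {..<k}" and e: "tail nxt (w j1) = tail nxt (w j2)"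
    have wH: "w j1 \<in> H" using W_sub[OF i] wW j by auto
    have ne: "tail nxt (w j1) \<noteq> vt i" using W_root'[OF i wW] j by simp
    have j1: "j1 < k" and j2: "j2 < k" using j by auto
    have "w j1 = out i (tail nxt (w j1))" using out_props(3)[OF i vert_tail[OF wH] ne wW[OF j1]] by simp
    moreover have "w j2 = out i (tail nxt (w j1))" using out_props(3)[OF i vert_tail[OF wH] ne wW[OF j2]] e by simp
    ultimately have "w j1 = w j2" by simp
    then have "{hs ! j1, opp (hs ! j1)} = {hs ! j2, opp (hs ! j2)}" using edge_w[OF j1] edge_w[OF j2] by simp
    moreover have "map (\<lambda>h. {h, opp h}) hs ! j1 = {hs ! j1, opp (hs ! j1)}" "map (\<lambda>h. {h, opp h}) hs ! j2 = {hs ! j2, opp (hs ! j2)}"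
      using j unfolding k_def by auto
    ultimately show "j1 = j2" using hs(3) j unfolding k_def distinct_conv_nth by fastforce
  qed
  have cT: "card T = k" unfolding T_def k_def using distinct_card[OF hs(4)] by simp
  have imT: "(\<lambda>j. tail nxt (w j)) ` {..<k} = T"
  proof -
    have a: "(\<lambda>j. tail nxt (w j)) ` {..<k} \<subseteq> T" using wT by blast
    moreover have "card ((\<lambda>j. tail nxt (w j)) ` {..<k}) = card T" using card_image[OF inj] cT by simp
    moreover have "finite T" unfolding T_def by simp
    ultimately show ?thesis using card_subset_eq by blast
  qed
  have Tv: "T \<subseteq> vertices H nxt"
  proof
    fix y assume "y \<in> T"
    then obtain j where j: "j < k" "y = tail nxt (hs ! j)" unfolding T_def k_def by (auto simp: in_set_conv_nth)
    then show "y \<in> vertices H nxt" using vert_tail[OF hsH[OF j(1)]] by simp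
  qed
  have nr: "vt i \<notin> T"
  proof
    assume "vt i \<in> T"
    then obtain j where "j < k" "tail nxt (w j) = vt i" using imT by auto
    then show False using W_root'[OF i wW] by blast
  qed
  have cl: "succ i y \<in> T" if y: "y \<in> T" for y
  proof -
    obtain j where j: "j < k" "y = tail nxt (w j)" using imT y by auto
    have wH: "w j \<in> H" using W_sub[OF i] wW[OF j(1)] by blast
    have yv: "y \<in> vertices H nxt" using vert_tail[OF wH] j(2) by simp
    have yne: "y \<noteq> vt i" using W_root'[OF i wW[OF j(1)]] j(2) by simp
    have "w j = out i y" using out_props(3)[OF i yv yne wW[OF j(1)]] j(2) by simp
    then have sy: "succ i y = tail nxt (opp (w j))" unfolding succ_def by simp
    show ?thesis
    proof (cases "hs ! j \<in> W i")
      case True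
      have "tail nxt (opp (hs ! j)) = tail nxt (hs ! (Suc j mod k))" using hs(5) j unfolding k_def head_def by blast
      moreover have "Suc j mod k < k" using k0 by simp
      ultimately show ?thesis using sy True unfolding w_def T_def k_def by auto
    next
      case False
      then have "opp (w j) = hs ! j" unfolding w_def using hsH[OF j(1)] by simp
      then show ?thesis using sy j unfolding T_def k_def by auto
    qed
  qed
  have "T \<noteq> {}" using cT k0 by auto
  then obtain y where y: "y \<in> T" by blast
  have finT: "finite T" unfolding T_def by simp
  show False by (rule closed_periodic[OF i finT Tv nr y cl])
qed

theorem spanning: "i < d \<Longrightarrow> spanning_tree_toward H opp nxt (W i) (outer_vertex nxt ou i)"
proof -
  assume i: "i < d"
  have r: "\<forall>u\<in>vertices H nxt. (u, vt i) \<in> (dir_rel opp nxt (W i))\<^sup>*" using reach_dir[OF i] by blast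
  have r2: "\<forall>u\<in>vertices H nxt. (u, vt i) \<in> (dir_rel opp nxt (W i) \<union> (dir_rel opp nxt (W i))\<inverse>)\<^sup>*"
    using r rtrancl_mono[of "dir_rel opp nxt (W i)" "dir_rel opp nxt (W i) \<union> (dir_rel opp nxt (W i))\<inverse>"] by blast
  show ?thesis unfolding spanning_tree_toward_def vt_ov
    using W_sub[OF i] no_opp[OF i] r r2 no_cycle[OF i] by blast
qed

end

theorem mainTheorem9:
  fixes d :: nat and H :: "'a set" and opp nxt :: "'a \<Rightarrow> 'a"
    and ou :: "nat \<Rightarrow> 'a" and W :: "nat \<Rightarrow> 'a set"
  assumes "3 \<le> d"
    and "d_map d H opp nxt ou"
    and "W0 d H opp nxt ou W"
    and "W1 d H opp nxt ou W"
    and "W2 d H opp nxt ou W"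
  shows "\<forall>i<d. spanning_tree_toward H opp nxt (W i) (outer_vertex nxt ou i)"
proof -
  interpret wood d H opp nxt ou W using assms by unfold_locales
  show ?thesis using spanning by blast
qed

end
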